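(* Let $k$ and $m_1,\ldots,m_n$ be positive integers, let $\tau=1^{m_1}\text{-}1^{m_2}\text{-}\cdots\text{-}1^{m_n}$, and let $A$ be the set of $k$-ary words (words on $\{1,\ldots,k\}$, including the empty word) avoiding $\tau$. Then \[ \sum_{a_1\cdots a_l\in A} x_{a_1}x_{a_2}\cdots x_{a_l} = \Phi\left(\prod_{i=1}^k\Big[e^{tx_i} - T\big\{G_\tau(x_i,u)\big\}\Big]\right), \] where \[ G_\tau(x,u)=\frac{ux^{m_1}(1-x)}{(1-x-u(x-x^{m_1}))(1-x-ux)}\prod_{i=2}^n\left[x^{m_i}+\frac{ux^{m_i}(1-x^{m_i})}{1-x-u(x-x^{m_i})}\right]. \]
   Context: A word $W=s_1\cdots s_l$ contains the vincular pattern $\tau=1^{m_1}\text{-}\cdots\text{-}1^{m_n}$ (with $M=m_1+\cdots+m_n$) if there are indices $1\le i_1<\cdots<i_M\le l$ with $s_{i_1}=\cdots=s_{i_M}$ and $i_{j+1}-i_j=1$ for all $j\notin\{m_1,m_1+m_2,\ldots,m_1+\cdots+m_{n-1}\}$; i.e. $M$ equal letters of which the first $m_1$ are consecutive, the next $m_2$ are consecutive, etc. Otherwise $W$ avoids $\tau$. The polynomials $l_k(t)$ are defined by $\sum_{k\ge0}l_k(t)y^k=e^{ty/(1+y)}$ (so $l_k(t)=(-1)^kL_k^{(-1)}(t)$ with $L_k^{(\alpha)}$ the generalized Laguerre polynomials). $T$ is the linear map sending $u^k\mapsto l_k(t)$, applied coefficientwise to power series in $u$ whose coefficients are power series in the variables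 $x_i$ (expanding $G_\tau(x,u)$ as a power series in $u$ and $x$). $\Phi$ is the linear map with $\Phi(t^j)=j!$ fixing all other variables, applied coefficientwise to power series in the $x_i$ whose coefficients are polynomials in $t$. *)

theory Defs
  imports "HOL-Computational_Algebra.Formal_Power_Series" "HOL-Computational_Algebra.Polynomial"
begin

text \<open>Vincular pattern tau = 1^{m_1}-...-1^{m_n}, given by the list ms = [m_1,...,m_n].
  Literal transcription of the paper's definition (0-based indices): a word W contains tau
  iff there are positions idx 0 < ... < idx (M-1) < length W carrying equal letters such that
  idx (j+1) = idx j + 1 whenever j+1 is not one of m_1, m_1+m_2, ..., m_1+...+m_(n-1).\<close>
definition contains_vinc :: "nat list \<Rightarrow> nat list \<Rightarrow> bool" where
  "contains_vinc ms W \<longleftrightarrow>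
     (let M = sum_list ms;
          B = {sum_list (take r ms) | r. 1 \<le> r \<and> r \<le> length ms - 1}
      in \<exists>idx :: nat \<Rightarrow> nat.
           (\<forall>j. j + 1 < M \<longrightarrow> idx j < idx (j + 1)) \<and>
           (0 < M \<longrightarrow> idx (M - 1) < length W) \<and>
           (\<forall>j<M. W ! (idx j) = W ! (idx 0)) \<and>
           (\<forall>j. j + 1 < M \<and> j + 1 \<notin> B \<longrightarrow> idx (j + 1) = idx j + 1))"

text \<open>G_tau(x,u) as a power series in x (outer) whose coefficients are power series in u (inner).\<close>
definition Gtau :: "nat list \<Rightarrow> real fps fps" where
  "Gtau ms =
     (let X = (fps_X :: real fps fps); U = fps_const (fps_X :: real fps); m1 = hd ms in
       U * X ^ m1 * (1 - X) * inverse (1 - X - U * (X - X ^ m1)) * inverse (1 - X - U * X) *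
       prod_list (map (\<lambda>mi. X ^ mi + U * X ^ mi * (1 - X ^ mi) * inverse (1 - X - U * (X - X ^ mi)))
                      (tl ms)))"

text \<open>l_k(t) = [y^k] e^{t y/(1+y)} = sum_j t^j/j! [y^k] (y/(1+y))^j  (terms j > k vanish).\<close>
definition lpoly :: "nat \<Rightarrow> real poly" where
  "lpoly k = (\<Sum>j\<le>k. monom (fps_nth ((fps_X * inverse (1 + fps_X) :: real fps) ^ j) k / fact j) j)"

text \<open>T : u^r \<mapsto> l_r(t), applied to a power series in u with finitely many nonzero coefficients
  (this is the case for every x-coefficient of G_tau).\<close>
definition Tmap :: "real fps \<Rightarrow> real poly" where
  "Tmap p = (\<Sum>r\<in>{r. fps_nth p r \<noteq> 0}. smult (fps_nth p r) (lpoly r))"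

definition Phi :: "real poly \<Rightarrow> real" where
  "Phi p = (\<Sum>j\<le>degree p. coeff p j * fact j)"

text \<open>Coefficient of x^j in e^{tx} - T{G_tau(x,u)}, a polynomial in t.\<close>
definition factor_coeff :: "nat list \<Rightarrow> nat \<Rightarrow> real poly" where
  "factor_coeff ms j = monom (1 / fact j) j - Tmap (fps_nth (Gtau ms) j)"

end

theory Submission
  imports Defs "HOL-Combinatorics.Multiset_Permutations" "HOL-Library.FuncSet"
begin

unbundle fps_syntax


definition Bset :: "nat list \<Rightarrow> nat set" where
  "Bset ms = {sum_list (take r ms) | r. 1 \<le> r \<and> r \<le> length ms - 1}"

definition goodidx :: "nat list \<Rightarrow> (nat \<Rightarrow> bool) \<Rightarrow> nat \<Rightarrow> (nat \<Rightarrow> nat) \<Rightarrow> bool" where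
  "goodidx ms P n idx \<longleftrightarrow>
           (\<forall>j. j + 1 < sum_list ms \<longrightarrow> idx j < idx (j + 1)) \<and>
           (0 < sum_list ms \<longrightarrow> idx (sum_list ms - 1) < n) \<and>
           (\<forall>j<sum_list ms. P (idx j)) \<and>
           (\<forall>j. j + 1 < sum_list ms \<and> j + 1 \<notin> Bset ms \<longrightarrow> idx (j + 1) = idx j + 1)"

definition containsP :: "nat list \<Rightarrow> (nat \<Rightarrow> bool) \<Rightarrow> nat \<Rightarrow> bool" where
  "containsP ms P n \<longleftrightarrow> (\<exists>idx. goodidx ms P n idx)"

lemma contains_vinc_alt:
  "contains_vinc ms W \<longleftrightarrow> (\<exists>idx.
           (\<forall>j. j + 1 < sum_list ms \<longrightarrow> idx j < idx (j + 1)) \<and>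
           (0 < sum_list ms \<longrightarrow> idx (sum_list ms - 1) < length W) \<and>
           (\<forall>j<sum_list ms. W ! (idx j) = W ! (idx 0)) \<and>
           (\<forall>j. j + 1 < sum_list ms \<and> j + 1 \<notin> Bset ms \<longrightarrow> idx (j + 1) = idx j + 1))"
  unfolding contains_vinc_def Bset_def Let_def by (rule refl)

lemma mono_idx_aux:
  fixes idx :: "nat \<Rightarrow> nat" and d :: nat
  assumes "\<forall>j. j + 1 < M \<longrightarrow> idx j < idx (j + 1)"
  shows "i + d < M \<Longrightarrow> idx i + d \<le> idx (i + d)"
proof (induction d)
  case (Suc d)
  then have "idx i + d \<le> idx (i + d)" by simp
  moreover have "idx (i + d) < idx (i + d + 1)" using assms Suc.prems by auto
  ultimately show ?case by simp
qed simp

lemma mono_idx: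
  fixes idx :: "nat \<Rightarrow> nat"
  assumes "\<forall>j. j + 1 < M \<longrightarrow> idx j < idx (j + 1)" "i \<le> j" "j < M"
  shows "idx i + (j - i) \<le> idx j"
  using mono_idx_aux[OF assms(1), of i "j - i"] assms(2,3) by simp

lemma goodidx_lt:
  assumes "goodidx ms P n idx" "j < sum_list ms"
  shows "idx j < n"
proof -
  have "idx j + (sum_list ms - 1 - j) \<le> idx (sum_list ms - 1)"
    using mono_idx[of "sum_list ms" idx j "sum_list ms - 1"] assms unfolding goodidx_def by auto
  then show ?thesis using assms unfolding goodidx_def by auto
qed

lemma contains_vinc_good:
  "contains_vinc ms W \<longleftrightarrow> (\<exists>idx. goodidx ms (\<lambda>p. W ! p = W ! (idx 0)) (length W) idx)"
  unfolding contains_vinc_alt goodidx_def by (rule refl)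

lemma contains_vinc_iff:
  assumes "0 < sum_list ms"
  shows "contains_vinc ms W \<longleftrightarrow> (\<exists>i. containsP ms (\<lambda>p. W ! p = i) (length W))"
proof
  assume "contains_vinc ms W"
  then obtain idx where "goodidx ms (\<lambda>p. W ! p = W ! (idx 0)) (length W) idx"
    unfolding contains_vinc_good by blast
  then show "\<exists>i. containsP ms (\<lambda>p. W ! p = i) (length W)"
    unfolding containsP_def by blast
next
  assume "\<exists>i. containsP ms (\<lambda>p. W ! p = i) (length W)"
  then obtain i idx where g: "goodidx ms (\<lambda>p. W ! p = i) (length W) idx"
    unfolding containsP_def by blast
  then have "W ! idx 0 = i" using assms unfolding goodidx_def by simp
  with g have "goodidx ms (\<lambda>p. W ! p = W ! (idx 0)) (length W) idx" by simp
  then show "contains_vinc ms W"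
    unfolding contains_vinc_good by blast
qed

lemma containsP_cong:
  assumes "\<And>q. q < n \<Longrightarrow> P q = Q q"
  shows "containsP ms P n = containsP ms Q n"
proof -
  have *: "goodidx ms Q n idx" if g: "goodidx ms P n idx" and e: "\<And>q. q < n \<Longrightarrow> P q = Q q" for P Q idx
  proof -
    have "Q (idx j)" if "j < sum_list ms" for j
      using goodidx_lt[OF g that] e g that unfolding goodidx_def by auto
    then show ?thesis using g unfolding goodidx_def by auto
  qed
  show ?thesis unfolding containsP_def using *[of P _ Q] *[of Q _ P] assms by metis
qed



lemma Bset_Cons: "Bset (m # ms) = (if ms = [] then {} else insert m ((+) m ` Bset ms))"
proof (cases "ms = []")
  case True then show ?thesis by (simp add: Bset_def)
next
  case False
  have "Bset (m # ms) \<subseteq> insert m ((+) m ` Bset ms)"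
  proof
    fix x assume "x \<in> Bset (m # ms)"
    then obtain r where r: "1 \<le> r" "r \<le> length ms" "x = sum_list (take r (m # ms))"
      by (auto simp: Bset_def)
    show "x \<in> insert m ((+) m ` Bset ms)"
    proof (cases "r = 1")
      case True then show ?thesis using r by simp
    next
      case False
      then obtain r' where "r = Suc r'" "1 \<le> r'" using r by (cases r) auto
      then have "sum_list (take r' ms) \<in> Bset ms" using r by (auto simp: Bset_def)
      then show ?thesis using r \<open>r = Suc r'\<close> by simp
    qed
  qed
  moreover have "insert m ((+) m ` Bset ms) \<subseteq> Bset (m # ms)"
  proof
    fix x assume "x \<in> insert m ((+) m ` Bset ms)"
    then consider "x = m" | r where "1 \<le> r" "r \<le> length ms - 1" "x = m + sum_list (take r ms)"
      by (auto simp: Bset_def)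
    then show "x \<in> Bset (m # ms)"
    proof cases
      case 1 then show ?thesis using False unfolding Bset_def
        by (intro CollectI exI[of _ 1]) (auto simp: Suc_le_eq)
    next
      case (2 r) then show ?thesis unfolding Bset_def
        by (intro CollectI exI[of _ "Suc r"]) auto
    qed
  qed
  ultimately show ?thesis using False by auto
qed

lemma Bset_Cons_ge: "x \<in> Bset (m # ms) \<Longrightarrow> m \<le> x"
  by (auto simp: Bset_Cons split: if_splits)

lemma containsP_Nil: "containsP [] P n"
  unfolding containsP_def goodidx_def by simp

lemma containsP_Cons:
  assumes "1 \<le> m"
  shows "containsP (m # ms) P n \<longleftrightarrow>
    (\<exists>p. p + m \<le> n \<and> (\<forall>j<m. P (p + j)) \<and> containsP ms (\<lambda>q. P (p + m + q)) (n - (p + m)))"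
proof
  assume "containsP (m # ms) P n"
  then obtain idx where g: "goodidx (m # ms) P n idx" unfolding containsP_def by blast
  define p where "p = idx 0"
  have S: "sum_list (m # ms) = m + sum_list ms" by simp
  have inc: "\<forall>j. j + 1 < m + sum_list ms \<longrightarrow> idx j < idx (j + 1)"
    using g unfolding goodidx_def by simp
  have con: "\<And>j. j + 1 < m + sum_list ms \<Longrightarrow> j + 1 \<notin> Bset (m # ms) \<Longrightarrow> idx (j + 1) = idx j + 1"
    using g unfolding goodidx_def by simp
  have Pall: "\<And>j. j < m + sum_list ms \<Longrightarrow> P (idx j)"
    using g unfolding goodidx_def by simp
  have first: "idx j = p + j" if "j < m" for j
    using that
  proof (induction j)
    case 0 then show ?case by (simp add: p_def)
  next
    case (Suc j)
    have "Suc j \<notin> Bset (m # ms)" using Bset_Cons_ge[of "Suc j" m ms] Suc.prems by auto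
    then have "idx (j + 1) = idx j + 1" using con[of j] Suc.prems by simp
    then show ?case using Suc by simp
  qed
  have lt: "idx j < n" if "j < m + sum_list ms" for j
    using goodidx_lt[OF g, of j] that by simp
  have "idx (m - 1) < n" using lt[of "m - 1"] assms by simp
  then have pm: "p + m \<le> n" using first[of "m - 1"] assms by simp
  define idx' where "idx' q = idx (m + q) - (p + m)" for q
  have ge: "p + m \<le> idx (m + q)" if "q < sum_list ms" for q
  proof -
    have "idx (m - 1) + (m + q - (m - 1)) \<le> idx (m + q)"
      using mono_idx[OF inc, of "m - 1" "m + q"] that by simp
    then show ?thesis using first[of "m - 1"] assms by simp
  qed
  have "goodidx ms (\<lambda>q. P (p + m + q)) (n - (p + m)) idx'"
    unfolding goodidx_def
  proof (intro conjI allI impI)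
    fix j assume "j + 1 < sum_list ms"
    then show "idx' j < idx' (j + 1)"
      using inc[rule_format, of "m + j"] ge[of j] ge[of "j+1"] unfolding idx'_def by simp
  next
    assume "0 < sum_list ms"
    then show "idx' (sum_list ms - 1) < n - (p + m)"
      using lt[of "m + (sum_list ms - 1)"] ge[of "sum_list ms - 1"] unfolding idx'_def by simp
  next
    fix j assume "j < sum_list ms"
    then show "P (p + m + idx' j)" using Pall[of "m + j"] ge[of j] unfolding idx'_def by simp
  next
    fix j assume j: "j + 1 < sum_list ms \<and> j + 1 \<notin> Bset ms"
    then have "ms \<noteq> []" by auto
    then have "m + j + 1 \<notin> Bset (m # ms)" using j by (auto simp: Bset_Cons)
    then have "idx (m + j + 1) = idx (m + j) + 1" using con[of "m + j"] j by simp
    then show "idx' (j + 1) = idx' j + 1" using ge[of j] j unfolding idx'_def by simp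
  qed
  then show "\<exists>p. p + m \<le> n \<and> (\<forall>j<m. P (p + j)) \<and> containsP ms (\<lambda>q. P (p + m + q)) (n - (p + m))"
    using pm first Pall unfolding containsP_def
    by (intro exI[of _ p]) (metis add_lessD1 less_add_same_cancel1 trans_less_add1)
next
  assume "\<exists>p. p + m \<le> n \<and> (\<forall>j<m. P (p + j)) \<and> containsP ms (\<lambda>q. P (p + m + q)) (n - (p + m))"
  then obtain p idx' where p: "p + m \<le> n" "\<forall>j<m. P (p + j)"
    and g: "goodidx ms (\<lambda>q. P (p + m + q)) (n - (p + m)) idx'"
    unfolding containsP_def by blast
  have inc: "\<And>j. j + 1 < sum_list ms \<Longrightarrow> idx' j < idx' (j + 1)"
    and con: "\<And>j. j + 1 < sum_list ms \<Longrightarrow> j + 1 \<notin> Bset ms \<Longrightarrow> idx' (j + 1) = idx' j + 1"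
    and Pall: "\<And>j. j < sum_list ms \<Longrightarrow> P (p + m + idx' j)"
    using g unfolding goodidx_def by auto
  have lt: "\<And>j. j < sum_list ms \<Longrightarrow> idx' j < n - (p + m)"
    using goodidx_lt[OF g] by blast
  define idx where "idx j = (if j < m then p + j else p + m + idx' (j - m))" for j
  have "goodidx (m # ms) P n idx"
    unfolding goodidx_def
  proof (intro conjI allI impI)
    fix j assume j: "j + 1 < sum_list (m # ms)"
    consider "j + 1 < m" | "j + 1 = m" | "m \<le> j" by linarith
    then show "idx j < idx (j + 1)"
    proof cases
      case 3
      then have "idx' (j - m) < idx' (j - m + 1)" using inc[of "j - m"] j by simp
      then show ?thesis using 3 unfolding idx_def by (simp add: Suc_diff_le)
    qed (auto simp: idx_def)
  next
    assume "0 < sum_list (m # ms)"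
    show "idx (sum_list (m # ms) - 1) < n"
    proof (cases "sum_list ms = 0")
      case True
      then have "sum_list (m # ms) - 1 = m - 1" by (metis add.right_neutral sum_list.Cons)
      then show ?thesis using p assms unfolding idx_def by simp
    next
      case False
      then have "idx' (sum_list ms - 1) < n - (p + m)" using lt[of "sum_list ms - 1"] by linarith
      moreover have "\<not> sum_list (m # ms) - 1 < m" "sum_list (m # ms) - 1 - m = sum_list ms - 1"
        using False sum_list.Cons[of m ms] by linarith+
      ultimately show ?thesis using p unfolding idx_def by simp
    qed
  next
    fix j assume j: "j < sum_list (m # ms)"
    show "P (idx j)"
    proof (cases "j < m")
      case True then show ?thesis using p unfolding idx_def by simp
    next
      case False then show ?thesis using Pall[of "j - m"] j unfolding idx_def by simp
    qed
  next
    fix j assume j: "j + 1 < sum_list (m # ms) \<and> j + 1 \<notin> Bset (m # ms)"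
    consider "j + 1 < m" | "j + 1 = m" | "m \<le> j" by linarith
    then show "idx (j + 1) = idx j + 1"
    proof cases
      case 1 then show ?thesis unfolding idx_def by simp
    next
      case 2
      then have "ms \<noteq> []" using j by auto
      then have "m \<in> Bset (m # ms)" by (simp add: Bset_Cons)
      then show ?thesis using 2 j by simp
    next
      case 3
      have "j + 1 - m \<notin> Bset ms"
      proof
        assume a: "j + 1 - m \<in> Bset ms"
        then have "ms \<noteq> []" by (auto simp: Bset_def)
        then have "m + (j + 1 - m) \<in> Bset (m # ms)" using a by (simp add: Bset_Cons)
        then show False using j 3 by simp
      qed
      moreover have "j - m + 1 < sum_list ms" using j 3 sum_list.Cons[of m ms] by linarith
      ultimately have "idx' (j - m + 1) = idx' (j - m) + 1" using con[of "j - m"] 3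
        by (simp add: Suc_diff_le)
      then show ?thesis using 3 unfolding idx_def by (simp add: Suc_diff_le)
    qed
  qed
  then show "containsP (m # ms) P n" unfolding containsP_def by blast
qed



definition cL :: "nat list \<Rightarrow> bool list \<Rightarrow> bool" where
  "cL ms b = containsP ms (\<lambda>q. b ! q) (length b)"

lemma cL_Nil[simp]: "cL [] b"
  by (simp add: cL_def containsP_Nil)

lemma cL_Cons:
  assumes "1 \<le> m"
  shows "cL (m # ms) b \<longleftrightarrow> (\<exists>p. p + m \<le> length b \<and> (\<forall>j<m. b ! (p + j)) \<and> cL ms (drop (p + m) b))"
proof -
  have "containsP ms (\<lambda>q. b ! (p + m + q)) (length b - (p + m)) = cL ms (drop (p + m) b)"
    if "p + m \<le> length b" for p
    unfolding cL_def length_drop using that by (intro containsP_cong) auto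
  then show ?thesis unfolding cL_def containsP_Cons[OF assms] by (metis (no_types, lifting))
qed

definition pos :: "nat list \<Rightarrow> bool" where "pos ms \<longleftrightarrow> (\<forall>m\<in>set ms. 1 \<le> m)"

lemma pos_Cons[simp]: "pos (m # ms) \<longleftrightarrow> 1 \<le> m \<and> pos ms"
  by (simp add: pos_def)

lemma cL_append: "pos ms \<Longrightarrow> cL ms v \<Longrightarrow> cL ms (x @ v)"
proof (induction ms arbitrary: v)
  case (Cons m ms)
  then obtain p where p: "p + m \<le> length v" "\<forall>j<m. v ! (p + j)" "cL ms (drop (p + m) v)"
    using cL_Cons[of m ms v] by auto
  have "length x + p + m \<le> length (x @ v)" using p by simp
  moreover have "\<forall>j<m. (x @ v) ! (length x + p + j)" using p by (simp add: nth_append)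
  moreover have "drop (length x + p + m) (x @ v) = drop (p + m) v" by simp
  ultimately show ?case using Cons.prems p cL_Cons[of m ms "x @ v"]
    by (metis pos_Cons)
qed simp

lemma cL_False: "pos ms \<Longrightarrow> cL ms (False # y) = cL ms y"
proof (cases ms)
  case (Cons m ms')
  assume "pos ms"
  then have m: "1 \<le> m" "pos ms'" using Cons by auto
  show ?thesis
  proof
    assume "cL ms (False # y)"
    then obtain p where p: "p + m \<le> length (False # y)" "\<forall>j<m. (False # y) ! (p + j)"
      "cL ms' (drop (p + m) (False # y))"
      using cL_Cons[OF m(1)] Cons by auto
    have "(False # y) ! (p + 0)" using p(2)[rule_format, of 0] m(1) by simp
    then have "p \<noteq> 0" by (cases p) auto
    then obtain p' where p': "p = Suc p'" by (cases p) auto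
    have "p' + m \<le> length y" "\<forall>j<m. y ! (p' + j)" "cL ms' (drop (p' + m) y)"
      using p p' by auto
    then show "cL ms y" using cL_Cons[OF m(1)] Cons by auto
  next
    assume "cL ms y"
    then show "cL ms (False # y)" using cL_append[of ms y "[False]"] \<open>pos ms\<close> by simp
  qed
qed simp

lemma cL_block:
  assumes "1 \<le> m" and that: "pos ms"
  shows "cL (m # ms) (replicate h True @ False # y) =
    (if m \<le> h then cL ms (replicate (h - m) True @ False # y) else cL (m # ms) y)"
proof (cases "m \<le> h")
  case True
  let ?w = "replicate h True @ False # y"
  have "cL (m # ms) ?w \<longleftrightarrow> cL ms (replicate (h - m) True @ False # y)"
  proof
    assume "cL (m # ms) ?w"
    then obtain p where p: "p + m \<le> length ?w" "cL ms (drop (p + m) ?w)"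
      using cL_Cons[OF assms(1)] by blast
    have eq: "drop m ?w = replicate (h - m) True @ False # y" using True by simp
    have c1: "cL ms (drop p (drop m ?w))" using p(2) by (simp only: drop_drop)
    have "cL ms (take p (drop m ?w) @ drop p (drop m ?w))" by (rule cL_append[OF that c1])
    then have "cL ms (drop m ?w)" by (simp only: append_take_drop_id)
    then show "cL ms (replicate (h - m) True @ False # y)" by (simp only: eq)
  next
    assume a: "cL ms (replicate (h - m) True @ False # y)"
    have "0 + m \<le> length ?w" "\<forall>j<m. ?w ! (0 + j)" using True by (auto simp: nth_append)
    moreover have "drop (0 + m) ?w = replicate (h - m) True @ False # y" using True by simp
    ultimately show "cL (m # ms) ?w" unfolding cL_Cons[OF assms(1)] using a by (intro exI[of _ 0]) simp
  qed
  then show ?thesis using True by simp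
next
  case False
  let ?w = "replicate h True @ False # y"
  have "cL (m # ms) ?w \<longleftrightarrow> cL (m # ms) y"
  proof
    assume "cL (m # ms) ?w"
    then obtain p where p: "p + m \<le> length ?w" "\<forall>j<m. ?w ! (p + j)" "cL ms (drop (p + m) ?w)"
      using cL_Cons[OF assms(1)] by blast
    have "\<not> p \<le> h"
    proof
      assume "p \<le> h"
      then have "h - p < m" using False by simp
      then have "?w ! (p + (h - p))" using p(2) by blast
      then show False using \<open>p \<le> h\<close> by (simp add: nth_append)
    qed
    define p' where "p' = p - h - 1"
    have p': "p = h + 1 + p'" using \<open>\<not> p \<le> h\<close> unfolding p'_def by simp
    have "p' + m \<le> length y" using p(1) p' by simp
    moreover have "\<forall>j<m. y ! (p' + j)"
    proof (intro allI impI)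
      fix j assume "j < m"
      then have "?w ! (p + j)" using p(2) by blast
      then show "y ! (p' + j)" using p' by (simp add: nth_append)
    qed
    moreover have "drop (p' + m) y = drop (p + m) ?w" using p' by simp
    ultimately show "cL (m # ms) y" unfolding cL_Cons[OF assms(1)] using p(3) by (intro exI[of _ p']) simp
  next
    assume "cL (m # ms) y"
    then have "cL (m # ms) ((replicate h True @ [False]) @ y)"
      using cL_append[of "m # ms" y "replicate h True @ [False]"] assms that by simp
    then show "cL (m # ms) ?w" by simp
  qed
  then show ?thesis using False by simp
qed

lemma cL_reps:
  assumes "1 \<le> m" and that: "pos ms"
  shows "cL (m # ms) (replicate h True) = (m \<le> h \<and> cL ms (replicate (h - m) True))"
proof
  let ?w = "replicate h True"
  assume "cL (m # ms) ?w"
  then obtain p where p: "p + m \<le> length ?w" "cL ms (drop (p + m) ?w)"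
    using cL_Cons[OF assms(1)] by blast
  have "replicate (h - m) True = replicate p True @ drop (p + m) ?w" using p(1)
    by (simp add: replicate_add[symmetric])
  then show "m \<le> h \<and> cL ms (replicate (h - m) True)"
    using p cL_append[OF that p(2), of "replicate p True"] by simp
next
  let ?w = "replicate h True"
  assume a: "m \<le> h \<and> cL ms (replicate (h - m) True)"
  have "0 + m \<le> length ?w" "\<forall>j<m. ?w ! (0 + j)" "drop (0 + m) ?w = replicate (h - m) True"
    using a by auto
  then show "cL (m # ms) ?w" unfolding cL_Cons[OF assms(1)] using a by (intro exI[of _ 0]) simp
qed



fun greedy :: "nat list \<Rightarrow> nat \<Rightarrow> nat list \<Rightarrow> bool" where
  "greedy [] h c = True"
| "greedy (m # ms) h c = (if m \<le> h then greedy ms (h - m) c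
     else (case c of [] \<Rightarrow> False | s # c' \<Rightarrow> greedy (m # ms) s c'))"

fun runsT :: "bool list \<Rightarrow> nat list" where
  "runsT [] = []"
| "runsT (False # b) = runsT b"
| "runsT (True # b) = (case b of True # _ \<Rightarrow> (case runsT b of [] \<Rightarrow> [] | n # ns \<Rightarrow> Suc n # ns)
                                | _ \<Rightarrow> 1 # runsT b)"

lemma runsT_reps:
  assumes "rest = [] \<or> hd rest = False"
  shows "1 \<le> n \<Longrightarrow> runsT (replicate n True @ rest) = n # runsT rest"
proof (induction n)
  case (Suc n)
  show ?case
  proof (cases n)
    case 0
    then show ?thesis using assms by (cases rest) auto
  next
    case (Suc n')
    then have "runsT (replicate n True @ rest) = n # runsT rest" using Suc.IH by simp
    then show ?thesis using Suc by simp
  qed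
qed simp

lemma runsT_Falses: "runsT (replicate n False @ b) = runsT b"
  by (induction n) auto

lemma cL_FF: "pos ms \<Longrightarrow> cL ms (replicate h True @ False # False # y) = cL ms (replicate h True @ False # y)"
proof (induction ms arbitrary: h)
  case (Cons m ms)
  then have m: "1 \<le> m" "pos ms" by auto
  show ?case
    using cL_block[OF m, of h "False # y"] cL_block[OF m, of h y] Cons.IH[OF m(2)] cL_False[OF Cons.prems, of y]
    by simp
qed simp

lemma cL_ms_empty: "1 \<le> m \<Longrightarrow> \<not> cL (m # ms) []"
  using cL_Cons[of m ms "[]"] by auto

lemma cL_reps_greedy: "pos ms \<Longrightarrow> cL ms (replicate h True) = greedy ms h []"
proof (induction ms arbitrary: h)
  case (Cons m ms)
  then have m: "1 \<le> m" "pos ms" by auto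
  show ?case using cL_reps[OF m, of h] Cons.IH[OF m(2)] by simp
qed simp

lemma cL_F_end: "pos ms \<Longrightarrow> cL ms (replicate h True @ [False]) = cL ms (replicate h True)"
proof (induction ms arbitrary: h)
  case (Cons m ms)
  then have m: "1 \<le> m" "pos ms" by auto
  show ?case using cL_block[OF m, of h "[]"] cL_reps[OF m, of h] Cons.IH[OF m(2)] cL_ms_empty[OF m(1)]
    by simp
qed simp

lemma takeWhile_id: "takeWhile id b = replicate (length (takeWhile id b)) True"
  by (metis (full_types) id_apply replicate_length_same set_takeWhileD)

lemma cL_greedy_aux:
  "pos ms \<Longrightarrow> b = [] \<or> hd b = False \<Longrightarrow> cL ms (replicate h True @ b) = greedy ms h (runsT b)"
proof (induction "length b" arbitrary: b ms h rule: less_induct)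
  case less
  show ?case
  proof (cases b)
    case Nil
    then show ?thesis using cL_reps_greedy[OF less.prems(1)] by simp
  next
    case (Cons x b')
    then have x: "x = False" using less.prems by simp
    show ?thesis
    proof (cases b')
      case Nil
      then show ?thesis using x Cons cL_F_end[OF less.prems(1)] cL_reps_greedy[OF less.prems(1)] by simp
    next
      case (Cons y b'')
      show ?thesis
      proof (cases y)
        case False
        then have "cL ms (replicate h True @ b) = cL ms (replicate h True @ False # b'')"
          using cL_FF[OF less.prems(1)] x Cons \<open>b = x # b'\<close> by simp
        also have "\<dots> = greedy ms h (runsT (False # b''))"
          using less.hyps[of "False # b''"] less.prems(1) \<open>b = x # b'\<close> Cons by simp
        finally show ?thesis using x Cons \<open>b = x # b'\<close> False by simp
      next
        case True
        define n where "n = length (takeWhile id b')"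
        define rest where "rest = dropWhile id b'"
        have b': "b' = replicate n True @ rest"
          unfolding n_def rest_def using takeWhile_id[of b'] takeWhile_dropWhile_id[of id b'] by metis
        have n1: "1 \<le> n" unfolding n_def using Cons True by simp
        have restF: "rest = [] \<or> hd rest = False"
          unfolding rest_def using hd_dropWhile[of id b'] by auto
        have lenr: "length rest < length b" using b' \<open>b = x # b'\<close> by simp
        have rb: "runsT b = n # runsT rest"
          using \<open>b = x # b'\<close> x b' runsT_reps[OF restF n1] by simp
        have "cL ms (replicate h True @ False # replicate n True @ rest) = greedy ms h (n # runsT rest)"
          using less.prems(1)
        proof (induction ms arbitrary: h)
          case (Cons m ms)
          then have m: "1 \<le> m" "pos ms" by auto
          have "cL (m # ms) (replicate n True @ rest) = greedy (m # ms) n (runsT rest)"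
            using less.hyps[OF lenr Cons.prems restF] .
          then show ?case using cL_block[OF m, of h] Cons.IH[OF m(2)] n1 by simp
        qed simp
        then show ?thesis using rb \<open>b = x # b'\<close> x b' by simp
      qed
    qed
  qed
qed

lemma cL_greedy: "pos ms \<Longrightarrow> cL ms b = greedy ms 0 (runsT b)"
  using cL_greedy_aux[of ms "False # b" 0] cL_False[of ms b] by simp



definition compw :: "'a \<Rightarrow> 'a list \<Rightarrow> nat list" where
  "compw i w = runsT (map (\<lambda>x. x = i) w)"

lemma runsT_True_ne: "runsT (True # b) \<noteq> []"
proof (induction b)
  case (Cons y b)
  show ?case
  proof (cases y)
    case True
    obtain n ns where "runsT (True # b) = n # ns" using Cons.IH by (cases "runsT (True # b)") auto
    then show ?thesis using True by simp
  qed simp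
qed simp

lemma runsT_TT: "runsT (True # b) = (case runsT b of [] \<Rightarrow> [1] | n # ns \<Rightarrow> if b \<noteq> [] \<and> hd b then Suc n # ns else 1 # n # ns)"
proof (cases b)
  case (Cons y b')
  show ?thesis
  proof (cases y)
    case True
    obtain n ns where e: "runsT (True # b') = n # ns" using runsT_True_ne by (cases "runsT (True # b')") auto
    then show ?thesis using True Cons by simp
  next
    case False
    then show ?thesis using Cons by (cases "runsT b'") auto
  qed
qed simp

lemma sum_runsT: "sum_list (runsT b) = count_list b True \<and> 0 \<notin> set (runsT b)"
proof (induction b)
  case (Cons y b)
  show ?case
  proof (cases y)
    case True
    show ?thesis using Cons.IH True by (cases "runsT b") (auto simp add: runsT_TT simp del: runsT.simps(3))
  qed (simp add: Cons.IH)
qed simp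

lemma zero_runsT: "0 \<notin> set (runsT b)"
  using sum_runsT by blast

lemma count_map_eq: "count_list (map (\<lambda>x. x = i) w) True = count_list w i"
  by (induction w) auto

lemma count_compw: "count_list w i = sum_list (compw i w)"
  using sum_runsT by (simp add: compw_def count_map_eq)

lemma zero_compw: "0 \<notin> set (compw i w)"
  by (simp add: compw_def zero_runsT)

lemma greedy_Nil: "greedy (m # ms) 0 [] = False" if "1 \<le> m"
  using that by simp

lemma contains_compw:
  assumes "pos ms" "ms \<noteq> []"
  shows "contains_vinc ms w \<longleftrightarrow> (\<exists>i. greedy ms 0 (compw i w))"
proof -
  have s: "0 < sum_list ms" using assms by (cases ms) (auto)
  have "containsP ms (\<lambda>p. w ! p = i) (length w) = cL ms (map (\<lambda>x. x = i) w)" for i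
    unfolding cL_def length_map by (intro containsP_cong) auto
  then show ?thesis
    unfolding contains_vinc_iff[OF s] compw_def using cL_greedy[OF assms(1)] by simp
qed

fun runs :: "'a list \<Rightarrow> ('a \<times> nat) list" where
  "runs [] = []"
| "runs (x # xs) = (case runs xs of [] \<Rightarrow> [(x, 1)]
     | (y, n) # r \<Rightarrow> if x = y then (y, Suc n) # r else (x, 1) # (y, n) # r)"

definition expand :: "('a \<times> nat) list \<Rightarrow> 'a list" where
  "expand L = concat (map (\<lambda>(x, n). replicate n x) L)"

definition valid :: "('a \<times> nat) list \<Rightarrow> bool" where
  "valid L \<longleftrightarrow> (\<forall>p\<in>set L. 0 < snd p) \<and> successively (\<lambda>p q. fst p \<noteq> fst q) L"

definition compL :: "'a \<Rightarrow> ('a \<times> nat) list \<Rightarrow> nat list" where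
  "compL i L = map snd (filter (\<lambda>p. fst p = i) L)"

lemma expand_Nil[simp]: "expand [] = []" and expand_Cons[simp]: "expand ((x, n) # L) = replicate n x @ expand L"
  by (simp_all add: expand_def)

lemma runs_Cons_shape: "\<exists>n r. runs (x # xs) = (x, n) # r"
  by (cases "runs xs") (auto split: prod.splits)

lemma expand_runs: "expand (runs w) = w"
proof (induction w)
  case (Cons x xs)
  note IH = Cons.IH
  show ?case
  proof (cases "runs xs")
    case Nil
    then show ?thesis using IH by simp
  next
    case (Cons p r)
    obtain y n where p: "p = (y, n)" by (cases p)
    show ?thesis using Cons IH p by auto
  qed
qed simp

lemma valid_runs: "valid (runs w)"
proof (induction w)
  case (Cons x xs)
  note IH = Cons.IH
  show ?case
  proof (cases "runs xs")
    case Nil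
    then show ?thesis by (simp add: valid_def)
  next
    case (Cons p r)
    obtain y n where p: "p = (y, n)" by (cases p)
    show ?thesis using Cons IH p by (auto simp: valid_def successively_Cons)
  qed
qed (simp add: valid_def)

lemma runs_rep:
  assumes "ys = [] \<or> hd ys \<noteq> x"
  shows "1 \<le> n \<Longrightarrow> runs (replicate n x @ ys) = (x, n) # runs ys"
proof (induction n)
  case (Suc n)
  show ?case
  proof (cases n)
    case 0
    show ?thesis
    proof (cases ys)
      case (Cons y ys')
      obtain n' r where r: "runs (y # ys') = (y, n') # r" using runs_Cons_shape[of y ys'] by blast
      have "y \<noteq> x" using assms Cons by simp
      then show ?thesis using 0 Cons r by simp
    qed (simp add: 0)
  next
    case (Suc n')
    then show ?thesis using Suc.IH by simp
  qed
qed simp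



lemma valid_Cons: "valid ((x, n) # L) \<longleftrightarrow> 0 < n \<and> valid L \<and> (L = [] \<or> fst (hd L) \<noteq> x)"
  by (cases L) (auto simp: valid_def)

lemma hd_expand: "valid L \<Longrightarrow> L \<noteq> [] \<Longrightarrow> expand L \<noteq> [] \<and> hd (expand L) = fst (hd L)"
  by (cases L) (auto simp: valid_Cons)

lemma expand_Nil_iff: "valid L \<Longrightarrow> expand L = [] \<longleftrightarrow> L = []"
  using hd_expand by (cases L) auto

lemma runs_expand: "valid L \<Longrightarrow> runs (expand L) = L"
proof (induction L)
  case (Cons p L)
  obtain x n where p: "p = (x, n)" by (cases p)
  have v: "0 < n" "valid L" "L = [] \<or> fst (hd L) \<noteq> x" using Cons.prems unfolding p valid_Cons by auto
  have "expand L = [] \<or> hd (expand L) \<noteq> x"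
  proof (cases "L = []")
    case False then show ?thesis using hd_expand[OF v(2) False] v(3) by auto
  qed simp
  then show ?case using runs_rep[of "expand L" x n] v Cons.IH p by simp
qed simp

lemma compw_expand: "valid L \<Longrightarrow> compw i (expand L) = compL i L"
proof (induction L)
  case (Cons p L)
  obtain x n where p: "p = (x, n)" by (cases p)
  have v: "0 < n" "valid L" "L = [] \<or> fst (hd L) \<noteq> x" using Cons.prems unfolding p valid_Cons by auto
  have IH: "runsT (map (\<lambda>y. y = i) (expand L)) = compL i L" using Cons.IH v unfolding compw_def by simp
  show ?case
  proof (cases "x = i")
    case True
    have "map (\<lambda>y. y = i) (expand L) = [] \<or> hd (map (\<lambda>y. y = i) (expand L)) = False"
    proof (cases "L = []")
      case False then show ?thesis using hd_expand[OF v(2) False] v(3) True by (cases "expand L") auto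
    qed simp
    then have "runsT (replicate n True @ map (\<lambda>y. y = i) (expand L)) = n # runsT (map (\<lambda>y. y = i) (expand L))"
      using runsT_reps v(1) by simp
    then show ?thesis using True IH p unfolding compw_def compL_def by simp
  next
    case False
    then show ?thesis using IH p runsT_Falses unfolding compw_def compL_def by simp
  qed
qed (simp add: compw_def compL_def)

lemma compw_runs: "compw i w = compL i (runs w)"
  using compw_expand[OF valid_runs, of i w] expand_runs[of w] by simp

lemma count_map_fst: "count_list (map fst L) i = length (compL i L)"
  by (induction L) (auto simp: compL_def)

lemma set_expand: "valid L \<Longrightarrow> set (expand L) = fst ` set L"
proof (induction L)
  case (Cons p L)
  obtain x n where p: "p = (x, n)" by (cases p)
  then show ?case using Cons valid_Cons[of x n L] by auto
qed simp

lemma compL_inj: "map fst L = map fst L' \<Longrightarrow> (\<forall>i. compL i L = compL i L') \<Longrightarrow> L = L'"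
proof (induction L arbitrary: L')
  case Nil then show ?case by simp
next
  case (Cons p L)
  obtain p' L'' where L': "L' = p' # L''" using Cons.prems(1) by (cases L') auto
  have f: "fst p = fst p'" "map fst L = map fst L''" using Cons.prems(1) L' by auto
  have c: "compL (fst p) (p # L) = compL (fst p) (p' # L'')" using Cons.prems(2) L' by blast
  then have s: "snd p = snd p'" using f unfolding compL_def by simp
  have "compL i L = compL i L''" for i
  proof -
    have "compL i (p # L) = compL i (p' # L'')" using Cons.prems(2) L' by blast
    then show ?thesis using f(1) unfolding compL_def by (cases "fst p = i") simp_all
  qed
  then have "L = L''" using Cons.IH f by blast
  then show ?case using L' f s by (simp add: prod_eq_iff)
qed

fun zipL :: "'a list \<Rightarrow> ('a \<Rightarrow> nat list) \<Rightarrow> ('a \<times> nat) list" where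
  "zipL [] c = []"
| "zipL (x # s) c = (x, hd (c x)) # zipL s (c(x := tl (c x)))"

lemma zipL_props:
  "(\<forall>i. count_list s i = length (c i)) \<Longrightarrow> map fst (zipL s c) = s \<and> (\<forall>i. compL i (zipL s c) = c i)"
proof (induction s arbitrary: c)
  case Nil
  then show ?case by (auto simp: compL_def)
next
  case (Cons x s)
  let ?c = "c(x := tl (c x))"
  have "\<forall>i. count_list s i = length (?c i)"
  proof
    fix i show "count_list s i = length (?c i)" using Cons.prems[rule_format, of i] by (cases "i = x") auto
  qed
  then have IH: "map fst (zipL s ?c) = s" "\<forall>i. compL i (zipL s ?c) = ?c i" using Cons.IH by auto
  have "length (c x) = count_list s x + 1" using Cons.prems[rule_format, of x] by simp
  then have ne: "c x \<noteq> []" by auto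
  have "compL i (zipL (x # s) c) = c i" for i
  proof (cases "i = x")
    case True
    then show ?thesis using IH(2) ne unfolding compL_def by (simp add: True)
  next
    case False
    then show ?thesis using IH(2)[rule_format, of i] unfolding compL_def by simp
  qed
  then show ?case using IH by simp
qed

lemma snd_in_compL: "p \<in> set L \<Longrightarrow> snd p \<in> set (compL (fst p) L)"
  by (auto simp: compL_def)

definition Wset :: "'a set \<Rightarrow> ('a \<Rightarrow> nat list) \<Rightarrow> 'a list set" where
  "Wset I c = {w. set w \<subseteq> I \<and> (\<forall>i\<in>I. compw i w = c i)}"

definition Sset :: "'a set \<Rightarrow> ('a \<Rightarrow> nat) \<Rightarrow> 'a list set" where
  "Sset I r = {s. set s \<subseteq> I \<and> successively (\<noteq>) s \<and> (\<forall>i\<in>I. count_list s i = r i)}"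

lemma compL_notin: "i \<notin> fst ` set L \<Longrightarrow> compL i L = []"
  by (induction L) (auto simp: compL_def)

lemma bij_W_S:
  assumes "\<forall>i\<in>I. 0 \<notin> set (c i)"
  shows "bij_betw (\<lambda>w. map fst (runs w)) (Wset I c) (Sset I (\<lambda>i. length (c i)))"
  unfolding bij_betw_def
proof (intro conjI)
  show "inj_on (\<lambda>w. map fst (runs w)) (Wset I c)"
  proof (rule inj_onI)
    fix w w' assume w: "w \<in> Wset I c" and w': "w' \<in> Wset I c" and e: "map fst (runs w) = map fst (runs w')"
    have "compL i (runs w) = compL i (runs w')" for i
    proof (cases "i \<in> I")
      case True
      then show ?thesis using w w' unfolding Wset_def compw_runs by auto
    next
      case False
      have "fst ` set (runs w) \<subseteq> I" "fst ` set (runs w') \<subseteq> I"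
        using w w' set_expand[OF valid_runs, of w] set_expand[OF valid_runs, of w'] expand_runs[of w]
          expand_runs[of w'] unfolding Wset_def by auto
      then have "i \<notin> fst ` set (runs w)" "i \<notin> fst ` set (runs w')" using False by auto
      then show ?thesis by (simp add: compL_notin)
    qed
    then have "runs w = runs w'" using compL_inj[OF e] by blast
    then have "expand (runs w) = expand (runs w')" by simp
    then show "w = w'" by (simp add: expand_runs)
  qed
next
  show "(\<lambda>w. map fst (runs w)) ` Wset I c = Sset I (\<lambda>i. length (c i))"
  proof
    show "(\<lambda>w. map fst (runs w)) ` Wset I c \<subseteq> Sset I (\<lambda>i. length (c i))"
    proof
      fix s assume "s \<in> (\<lambda>w. map fst (runs w)) ` Wset I c"
      then obtain w where w: "w \<in> Wset I c" "s = map fst (runs w)" by blast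
      have "set s \<subseteq> I" using w set_expand[OF valid_runs, of w] expand_runs[of w] unfolding Wset_def by auto
      moreover have "successively (\<noteq>) s"
        using valid_runs[of w] w(2) unfolding valid_def by (simp add: successively_map)
      moreover have "\<forall>i\<in>I. count_list s i = length (c i)"
        using w unfolding Wset_def by (simp add: count_map_fst compw_runs)
      ultimately show "s \<in> Sset I (\<lambda>i. length (c i))" unfolding Sset_def by blast
    qed
  next
    show "Sset I (\<lambda>i. length (c i)) \<subseteq> (\<lambda>w. map fst (runs w)) ` Wset I c"
    proof
      fix s assume s: "s \<in> Sset I (\<lambda>i. length (c i))"
      define c' where "c' i = (if i \<in> I then c i else [])" for i
      have cnt: "\<forall>i. count_list s i = length (c' i)"
        using s unfolding Sset_def c'_def by (auto simp: count_list_0_iff)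
      define L where "L = zipL s c'"
      have L: "map fst L = s" "\<forall>i. compL i L = c' i" using zipL_props[OF cnt] unfolding L_def by auto
      have vL: "valid L"
        unfolding valid_def
      proof
        show "\<forall>p\<in>set L. 0 < snd p"
        proof
          fix p assume "p \<in> set L"
          then have "snd p \<in> set (c' (fst p))" using snd_in_compL[of p L] L(2) by simp
          then have sp: "snd p \<in> set (c' (fst p))" .
          show "0 < snd p"
          proof (cases "fst p \<in> I")
            case True
            then have "0 \<notin> set (c (fst p))" using assms by blast
            moreover have "snd p \<in> set (c (fst p))" using sp True unfolding c'_def by simp
            ultimately show ?thesis by (cases "snd p") auto
          next
            case False
            then show ?thesis using sp unfolding c'_def by simp
          qed
        qed
        show "successively (\<lambda>p q. fst p \<noteq> fst q) L"
        proof -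
          have "successively (\<noteq>) (map fst L)" using s L(1) unfolding Sset_def by simp
          then show ?thesis by (simp add: successively_map)
        qed
      qed
      define w where "w = expand L"
      have rw: "runs w = L" unfolding w_def using runs_expand[OF vL] .
      have "set w = set s" unfolding w_def using set_expand[OF vL] L(1) by (metis list.set_map)
      then have "set w \<subseteq> I" using s unfolding Sset_def by simp
      moreover have "\<forall>i\<in>I. compw i w = c i" using rw L(2) unfolding compw_runs c'_def by simp
      ultimately have "w \<in> Wset I c" unfolding Wset_def by blast
      then show "s \<in> (\<lambda>w. map fst (runs w)) ` Wset I c" using rw L(1) by force
    qed
  qed
qed

lemma card_W_S: "\<forall>i\<in>I. 0 \<notin> set (c i) \<Longrightarrow> card (Wset I c) = card (Sset I (\<lambda>i. length (c i)))"
  using bij_W_S bij_betw_same_card by blast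



definition comps :: "nat \<Rightarrow> nat list set" where
  "comps a = {c. sum_list c = a \<and> 0 \<notin> set c}"

lemma length_le_sum: "0 \<notin> set c \<Longrightarrow> length c \<le> sum_list c"
  by (induction c) (auto simp: Suc_le_eq)

lemma finite_comps: "finite (comps a)"
proof (rule finite_subset)
  show "comps a \<subseteq> {xs. set xs \<subseteq> {0..a} \<and> length xs \<le> a}"
    using length_le_sum member_le_sum_list unfolding comps_def by fastforce
  show "finite {xs. set xs \<subseteq> {0..a} \<and> length xs \<le> a}" by (rule finite_lists_length_le) simp
qed

lemma finite_Wset:
  assumes "finite I"
  shows "finite (Wset I f)"
proof (rule finite_subset)
  show "Wset I f \<subseteq> {w. set w \<subseteq> I \<and> length w \<le> (\<Sum>i\<in>I. sum_list (f i))}"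
  proof
    fix w assume w: "w \<in> Wset I f"
    then have "length w = (\<Sum>i\<in>I. count_list w i)" using sum_count_set[of w I] assms unfolding Wset_def by simp
    also have "\<dots> = (\<Sum>i\<in>I. sum_list (f i))" using w unfolding Wset_def by (simp add: count_compw)
    finally show "w \<in> {w. set w \<subseteq> I \<and> length w \<le> (\<Sum>i\<in>I. sum_list (f i))}" using w unfolding Wset_def by simp
  qed
  show "finite {w. set w \<subseteq> I \<and> length w \<le> (\<Sum>i\<in>I. sum_list (f i))}"
    by (rule finite_lists_length_le[OF assms])
qed

lemma decomp:
  assumes "finite I"
  shows "card {w. set w \<subseteq> I \<and> (\<forall>i\<in>I. Q i (compw i w)) \<and> (\<forall>i\<in>I. count_list w i = \<alpha> i)}
    = (\<Sum>f\<in>PiE I (\<lambda>i. {c\<in>comps (\<alpha> i). Q i c}). card (Wset I f))"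
proof -
  let ?P = "PiE I (\<lambda>i. {c\<in>comps (\<alpha> i). Q i c})"
  have eq: "{w. set w \<subseteq> I \<and> (\<forall>i\<in>I. Q i (compw i w)) \<and> (\<forall>i\<in>I. count_list w i = \<alpha> i)}
      = (\<Union>f\<in>?P. Wset I f)"
  proof
    show "{w. set w \<subseteq> I \<and> (\<forall>i\<in>I. Q i (compw i w)) \<and> (\<forall>i\<in>I. count_list w i = \<alpha> i)} \<subseteq> (\<Union>f\<in>?P. Wset I f)"
    proof
      fix w assume w: "w \<in> {w. set w \<subseteq> I \<and> (\<forall>i\<in>I. Q i (compw i w)) \<and> (\<forall>i\<in>I. count_list w i = \<alpha> i)}"
      let ?f = "restrict (\<lambda>i. compw i w) I"
      have "compw i w \<in> {c\<in>comps (\<alpha> i). Q i c}" if "i \<in> I" for i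
        using w that zero_compw[of i w] count_compw[of w i] unfolding comps_def by simp
      then have "?f \<in> ?P" by (simp add: restrict_PiE_iff)
      moreover have "w \<in> Wset I ?f" using w unfolding Wset_def by simp
      ultimately show "w \<in> (\<Union>f\<in>?P. Wset I f)" by blast
    qed
    show "(\<Union>f\<in>?P. Wset I f) \<subseteq> {w. set w \<subseteq> I \<and> (\<forall>i\<in>I. Q i (compw i w)) \<and> (\<forall>i\<in>I. count_list w i = \<alpha> i)}"
    proof
      fix w assume "w \<in> (\<Union>f\<in>?P. Wset I f)"
      then obtain f where f: "f \<in> ?P" "w \<in> Wset I f" by blast
      have "Q i (compw i w) \<and> count_list w i = \<alpha> i" if "i \<in> I" for i
      proof -
        have "compw i w = f i" "f i \<in> comps (\<alpha> i)" "Q i (f i)"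
          using f that unfolding Wset_def by auto
        then show ?thesis using count_compw[of w i] unfolding comps_def by simp
      qed
      then show "w \<in> {w. set w \<subseteq> I \<and> (\<forall>i\<in>I. Q i (compw i w)) \<and> (\<forall>i\<in>I. count_list w i = \<alpha> i)}"
        using f unfolding Wset_def by blast
    qed
  qed
  have "card (\<Union>f\<in>?P. Wset I f) = (\<Sum>f\<in>?P. card (Wset I f))"
  proof (rule card_UN_disjoint)
    show "finite ?P" using assms finite_comps by (intro finite_PiE) simp_all
    show "\<forall>f\<in>?P. finite (Wset I f)" using finite_Wset[OF assms] by blast
    show "\<forall>f\<in>?P. \<forall>g\<in>?P. f \<noteq> g \<longrightarrow> Wset I f \<inter> Wset I g = {}"
    proof (intro ballI impI)
      fix f g assume f: "f \<in> ?P" and g: "g \<in> ?P" and ne: "f \<noteq> g"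
      have "\<exists>i\<in>I. f i \<noteq> g i"
      proof (rule ccontr)
        assume "\<not> (\<exists>i\<in>I. f i \<noteq> g i)"
        then have "f = g" using PiE_ext[OF f g] by blast
        then show False using ne by simp
      qed
      then obtain i where i: "i \<in> I" "f i \<noteq> g i" by blast
      then show "Wset I f \<inter> Wset I g = {}" unfolding Wset_def by auto
    qed
  qed
  then show ?thesis using eq by simp
qed

lemma card_words:
  assumes "finite I"
  shows "real (card {w. set w \<subseteq> I \<and> (\<forall>i\<in>I. count_list w i = a i)})
    = fact (\<Sum>i\<in>I. a i) / (\<Prod>i\<in>I. fact (a i))"
proof -
  define M where "M = (\<Sum>i\<in>I. replicate_mset (a i) i)"
  have cM: "count M x = (if x \<in> I then a x else 0)" for x
    unfolding M_def count_sum using assms by (simp add: sum.delta)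
  have S: "{w. set w \<subseteq> I \<and> (\<forall>i\<in>I. count_list w i = a i)} = permutations_of_multiset M"
  proof -
    have "(set w \<subseteq> I \<and> (\<forall>i\<in>I. count_list w i = a i)) \<longleftrightarrow> mset w = M" for w
    proof
      assume h: "set w \<subseteq> I \<and> (\<forall>i\<in>I. count_list w i = a i)"
      have "count_list w x = (if x \<in> I then a x else 0)" for x
      proof (cases "x \<in> I")
        case False
        then have "x \<notin> set w" using h by blast
        then show ?thesis using False by (simp add: count_list_0_iff)
      qed (use h in simp)
      then show "mset w = M" unfolding multiset_eq_iff count_mset cM by blast
    next
      assume "mset w = M"
      then have h: "count_list w x = (if x \<in> I then a x else 0)" for x
        using cM[of x] by (simp add: count_mset[symmetric])
      have "set w \<subseteq> I"
      proof
        fix x assume "x \<in> set w"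
        then have "count_list w x \<noteq> 0" by (simp add: count_list_0_iff)
        then show "x \<in> I" using h[of x] by (cases "x \<in> I") auto
      qed
      then show "set w \<subseteq> I \<and> (\<forall>i\<in>I. count_list w i = a i)" using h by simp
    qed
    then show ?thesis unfolding permutations_of_multiset_def by auto
  qed
  have sM: "set_mset M = {i\<in>I. 0 < a i}" using cM by (auto simp: set_mset_def)
  have P: "(\<Prod>x\<in>set_mset M. fact (count M x)) = (\<Prod>i\<in>I. fact (a i) :: nat)"
  proof -
    have "(\<Prod>x\<in>{i\<in>I. 0 < a i}. fact (count M x)) = (\<Prod>x\<in>{i\<in>I. 0 < a i}. fact (a x) :: nat)"
      by (intro prod.cong) (auto simp: cM)
    also have "\<dots> = (\<Prod>i\<in>I. fact (a i))"
      using assms by (intro prod.mono_neutral_left) auto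
    finally show ?thesis unfolding sM .
  qed
  have "size M = (\<Sum>x\<in>set_mset M. count M x)" by (simp add: size_multiset_overloaded_eq)
  also have "\<dots> = (\<Sum>x\<in>{i\<in>I. 0 < a i}. a x)"
    unfolding sM by (intro sum.cong) (auto simp: cM)
  also have "\<dots> = (\<Sum>i\<in>I. a i)"
    using assms by (intro sum.mono_neutral_left) auto
  finally have sz: "size M = (\<Sum>i\<in>I. a i)" .
  have "card (permutations_of_multiset M) * (\<Prod>i\<in>I. fact (a i)) = fact (\<Sum>i\<in>I. a i)"
    using card_permutations_of_multiset_aux[of M] P sz by simp
  then have "real (card (permutations_of_multiset M) * (\<Prod>i\<in>I. fact (a i))) = real (fact (\<Sum>i\<in>I. a i))"
    by (simp only:)
  then have "real (card (permutations_of_multiset M)) * (\<Prod>i\<in>I. fact (a i)) = fact (\<Sum>i\<in>I. a i)"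
    by (simp only: of_nat_mult of_nat_prod of_nat_fact)
  moreover have "(\<Prod>i\<in>I. fact (a i) :: real) \<noteq> 0" using assms by (simp add: prod_zero_iff)
  ultimately show ?thesis unfolding S by (simp add: eq_divide_eq)
qed





lemma Phi_alt: "degree p \<le> N \<Longrightarrow> Phi p = (\<Sum>j\<le>N. coeff p j * fact j)"
  unfolding Phi_def by (intro sum.mono_neutral_left) (auto simp: coeff_eq_0)

lemma Phi_add: "Phi (p + q) = Phi p + Phi q"
proof -
  let ?N = "max (degree p) (degree q)"
  have "Phi (p + q) = (\<Sum>j\<le>?N. coeff (p + q) j * fact j)"
    by (rule Phi_alt) (simp add: degree_add_le)
  also have "\<dots> = (\<Sum>j\<le>?N. coeff p j * fact j) + (\<Sum>j\<le>?N. coeff q j * fact j)"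
    by (simp add: algebra_simps sum.distrib)
  also have "\<dots> = Phi p + Phi q" using Phi_alt[of p ?N] Phi_alt[of q ?N] by simp
  finally show ?thesis .
qed

lemma Phi_zero[simp]: "Phi 0 = 0" by (simp add: Phi_def)

lemma Phi_smult: "Phi (smult c p) = c * Phi p"
proof -
  have "Phi (smult c p) = (\<Sum>j\<le>degree p. coeff (smult c p) j * fact j)"
    by (rule Phi_alt) (simp add: degree_smult_le)
  then show ?thesis by (simp add: Phi_def sum_distrib_left algebra_simps)
qed

lemma Phi_minus: "Phi (- p) = - Phi p"
  using Phi_smult[of "-1" p] by simp

lemma Phi_diff: "Phi (p - q) = Phi p - Phi q"
  using Phi_add[of p "- q"] Phi_minus[of q] by simp

lemma Phi_sum: "Phi (\<Sum>x\<in>A. f x) = (\<Sum>x\<in>A. Phi (f x))"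
  by (induction A rule: infinite_finite_induct) (simp_all add: Phi_add)

lemma Phi_monom: "Phi (monom c n) = c * fact n"
proof -
  have "Phi (monom c n) = (\<Sum>j\<le>n. coeff (monom c n) j * fact j)"
    by (rule Phi_alt) (simp add: degree_monom_le)
  also have "\<dots> = (\<Sum>j\<le>n. if j = n then c * fact j else 0)"
    by (intro sum.cong) (auto simp: coeff_monom)
  finally show ?thesis by simp
qed

lemma prod_monom: "(\<Prod>i\<in>I. monom (c i) (n i)) = monom (\<Prod>i\<in>I. c i) (\<Sum>i\<in>I. n i)"
  by (induction I rule: infinite_finite_induct) (simp_all add: mult_monom monom_0 one_pCons)

definition Yf :: "real fps" where "Yf = fps_X * inverse (1 + fps_X)"

lemma coeff_lpoly: "coeff (lpoly r) j = (Yf ^ j) $ r / fact j"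
proof -
  have "coeff (lpoly r) j = (\<Sum>i\<le>r. if i = j then (Yf ^ i) $ r / fact i else 0)"
    unfolding lpoly_def coeff_sum coeff_monom Yf_def by (intro sum.cong) auto
  also have "\<dots> = (if j \<le> r then (Yf ^ j) $ r / fact j else 0)"
    by (simp add: sum.delta)
  also have "\<dots> = (Yf ^ j) $ r / fact j"
  proof (cases "j \<le> r")
    case False
    have "Yf ^ j = fps_X ^ j * inverse (1 + fps_X) ^ j" unfolding Yf_def by (simp add: power_mult_distrib)
    then have "(Yf ^ j) $ r = 0" using False by (simp add: fps_X_power_mult_nth)
    then show ?thesis using False by simp
  qed simp
  finally show ?thesis .
qed

lemma comps_0: "comps 0 = {[]}"
proof -
  have "c = []" if "c \<in> comps 0" for c using that unfolding comps_def by (cases c) auto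
  then show ?thesis unfolding comps_def by auto
qed

lemma comps_pos: "0 < a \<Longrightarrow> comps a = (\<Union>s\<in>{1..a}. (\<lambda>c. s # c) ` comps (a - s))"
proof
  assume a: "0 < a"
  show "comps a \<subseteq> (\<Union>s\<in>{1..a}. (\<lambda>c. s # c) ` comps (a - s))"
  proof
    fix c assume c: "c \<in> comps a"
    then obtain s c' where "c = s # c'" using a unfolding comps_def by (cases c) auto
    then show "c \<in> (\<Union>s\<in>{1..a}. (\<lambda>c. s # c) ` comps (a - s))" using c unfolding comps_def
      by (auto intro!: bexI[of _ s])
  qed
  show "(\<Union>s\<in>{1..a}. (\<lambda>c. s # c) ` comps (a - s)) \<subseteq> comps a"
    unfolding comps_def by auto
qed

lemma sum_comps:
  "(\<Sum>c\<in>comps a. f c) = (if a = 0 then f [] else (\<Sum>s\<in>{1..a}. \<Sum>c\<in>comps (a - s). f (s # c)))"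
proof (cases "a = 0")
  case False
  then have ca: "comps a = (\<Union>s\<in>{1..a}. (\<lambda>c. s # c) ` comps (a - s))" using comps_pos by simp
  have "(\<Sum>c\<in>comps a. f c) = (\<Sum>s\<in>{1..a}. \<Sum>c\<in>(\<lambda>c. s # c) ` comps (a - s). f c)"
    unfolding ca using finite_comps by (intro sum.UNION_disjoint) auto
  also have "\<dots> = (\<Sum>s\<in>{1..a}. \<Sum>c\<in>comps (a - s). f (s # c))"
    by (simp add: sum.reindex inj_on_def comp_def)
  finally show ?thesis using False by simp
qed (simp add: comps_0)

definition Zf :: "real fps" where "Zf = Abs_fps (\<lambda>n. if n = 0 then 0 else 1)"

lemma cnt_comps: "(\<Sum>c\<in>comps a. if length c = r then 1 else 0 :: real) = (Zf ^ r) $ a"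
proof (induction r arbitrary: a)
  case 0
  show ?case by (subst sum_comps) auto
next
  case (Suc r)
  show ?case
  proof (cases "a = 0")
    case True
    then show ?thesis by (subst sum_comps) (simp add: fps_mult_nth Zf_def)
  next
    case False
    have "(\<Sum>c\<in>comps a. if length c = Suc r then 1 else 0 :: real)
        = (\<Sum>s\<in>{1..a}. \<Sum>c\<in>comps (a - s). if length c = r then 1 else 0)"
      using False by (subst sum_comps) simp
    also have "\<dots> = (\<Sum>s\<in>{1..a}. (Zf ^ r) $ (a - s))" using Suc.IH by simp
    also have "\<dots> = (\<Sum>i=0..a. Zf $ i * (Zf ^ r) $ (a - i))"
    proof -
      have "(\<Sum>i=0..a. Zf $ i * (Zf ^ r) $ (a - i)) = (\<Sum>i\<in>{1..a}. Zf $ i * (Zf ^ r) $ (a - i))"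
        by (intro sum.mono_neutral_right) (auto simp: Zf_def)
      also have "\<dots> = (\<Sum>s\<in>{1..a}. (Zf ^ r) $ (a - s))" by (intro sum.cong) (auto simp: Zf_def)
      finally show ?thesis by simp
    qed
    also have "\<dots> = (Zf ^ Suc r) $ a" by (simp add: fps_mult_nth)
    finally show ?thesis .
  qed
qed

lemma Zf_X: "Zf * (1 - fps_X) = fps_X"
proof -
  have e: "Zf * (1 - fps_X) = Zf - fps_X * Zf" by (simp add: algebra_simps)
  show ?thesis unfolding e
  proof (rule fps_ext)
    fix n show "(Zf - fps_X * Zf) $ n = fps_X $ n"
    proof (cases n)
      case (Suc k)
      then show ?thesis by (cases k) (simp_all add: Zf_def)
    qed (simp add: Zf_def)
  qed
qed

lemma Yf_mult: "Yf * (1 + fps_X) = fps_X"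
proof -
  have "inverse (1 + fps_X) * (1 + fps_X) = (1 :: real fps)" by (rule inverse_mult_eq_1) simp
  then show ?thesis unfolding Yf_def by (metis mult.assoc mult.right_neutral)
qed

lemma Yf_compose: "Yf oo Zf = fps_X"
proof -
  have z0: "Zf $ 0 = 0" by (simp add: Zf_def)
  have "(Yf * (1 + fps_X)) oo Zf = fps_X oo Zf" by (simp add: Yf_mult)
  then have "(Yf oo Zf) * (1 + Zf) = Zf"
    by (simp add: fps_compose_mult_distrib[OF z0] fps_compose_add_distrib z0)
  then have "(Yf oo Zf) * (1 + Zf) * (1 - fps_X) = Zf * (1 - fps_X)" by simp
  moreover have "(1 + Zf) * (1 - fps_X) = 1" using Zf_X by (simp add: algebra_simps)
  ultimately show ?thesis using Zf_X by (simp add: mult.assoc)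
qed

lemma sum_comps_len:
  fixes g :: "nat \<Rightarrow> real"
  shows "(\<Sum>c\<in>comps a. g (length c)) = (\<Sum>r\<le>a. g r * (Zf ^ r) $ a)"
proof -
  have gr: "(\<Sum>c\<in>{c\<in>comps a. length c = r}. g (length c)) = (\<Sum>c\<in>comps a. g r * (if length c = r then 1 else 0))" for r
  proof -
    have "(\<Sum>c\<in>comps a. g r * (if length c = r then 1 else 0)) = (\<Sum>c\<in>comps a. if length c = r then g r else 0)"
      by (intro sum.cong) auto
    also have "\<dots> = (\<Sum>c\<in>{c\<in>comps a. length c = r}. g r)" by (rule sum.inter_filter[OF finite_comps, symmetric])
    also have "\<dots> = (\<Sum>c\<in>{c\<in>comps a. length c = r}. g (length c))" by (intro sum.cong) auto
    finally show ?thesis by simp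
  qed
  have "(\<Sum>c\<in>comps a. g (length c)) = (\<Sum>r\<le>a. \<Sum>c\<in>{c\<in>comps a. length c = r}. g (length c))"
    using finite_comps length_le_sum unfolding comps_def
    by (intro sum.group[symmetric]) auto
  also have "\<dots> = (\<Sum>r\<le>a. \<Sum>c\<in>comps a. g r * (if length c = r then 1 else 0))"
    using gr by simp
  also have "\<dots> = (\<Sum>r\<le>a. g r * (Zf ^ r) $ a)"
    by (simp add: sum_distrib_left[symmetric] cnt_comps)
  finally show ?thesis .
qed

lemma lpoly_comps: "(\<Sum>c\<in>comps a. lpoly (length c)) = monom (1 / fact a) a"
proof (rule poly_eqI)
  fix j
  have "coeff (\<Sum>c\<in>comps a. lpoly (length c)) j = (\<Sum>r\<le>a. (Yf ^ j) $ r / fact j * (Zf ^ r) $ a)"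
    unfolding coeff_sum coeff_lpoly by (rule sum_comps_len)
  also have "\<dots> = ((Yf ^ j) oo Zf) $ a / fact j"
    by (simp add: fps_compose_nth atLeast0AtMost sum_divide_distrib algebra_simps)
  also have "(Yf ^ j) oo Zf = fps_X ^ j"
    using fps_compose_power[of Zf Yf j] Yf_compose by (simp add: Zf_def)
  finally show "coeff (\<Sum>c\<in>comps a. lpoly (length c)) j = coeff (monom (1 / fact a) a) j"
    by (auto simp: coeff_monom)
qed

lemma Tmap_sum:
  assumes "finite C"
  shows "Tmap (\<Sum>c\<in>C. fps_X ^ f c) = (\<Sum>c\<in>C. lpoly (f c))"
proof -
  let ?p = "(\<Sum>c\<in>C. fps_X ^ f c) :: real fps"
  have nth: "?p $ r = (\<Sum>c\<in>C. if f c = r then 1 else 0)" for r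
    by (simp add: fps_sum_nth eq_commute)
  have sub: "{r. ?p $ r \<noteq> 0} \<subseteq> f ` C"
  proof
    fix r assume "r \<in> {r. ?p $ r \<noteq> 0}"
    then have "(\<Sum>c\<in>C. if f c = r then 1 else 0 :: real) \<noteq> 0" using nth by simp
    have "\<exists>c\<in>C. f c = r"
    proof (rule ccontr)
      assume "\<not> (\<exists>c\<in>C. f c = r)"
      then have "(\<Sum>c\<in>C. if f c = r then 1 else 0 :: real) = 0" by (intro sum.neutral) auto
      then show False using \<open>(\<Sum>c\<in>C. if f c = r then 1 else 0 :: real) \<noteq> 0\<close> by simp
    qed
    then show "r \<in> f ` C" by blast
  qed
  have "Tmap ?p = (\<Sum>r\<in>f ` C. smult (?p $ r) (lpoly r))"
    unfolding Tmap_def using sub assms by (intro sum.mono_neutral_left) auto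
  also have "\<dots> = (\<Sum>r\<in>f ` C. \<Sum>c\<in>C. if f c = r then lpoly r else 0)"
    unfolding nth smult_sum by (intro sum.cong refl) auto
  also have "\<dots> = (\<Sum>c\<in>C. \<Sum>r\<in>f ` C. if f c = r then lpoly r else 0)"
    by (rule sum.swap)
  also have "\<dots> = (\<Sum>c\<in>C. lpoly (f c))"
    using assms by (intro sum.cong refl) (simp add: sum.delta' eq_commute)
  finally show ?thesis .
qed





definition P :: "nat list \<Rightarrow> nat \<Rightarrow> nat \<Rightarrow> real fps" where
  "P ms h a = (\<Sum>c\<in>comps a. if greedy ms h c then fps_X ^ length c else 0)"

definition Aa :: "nat \<Rightarrow> real fps" where
  "Aa a = (\<Sum>c\<in>comps a. fps_X ^ length c)"

lemma P_Nil: "P [] h a = Aa a"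
  unfolding P_def Aa_def by simp

lemma Aa_rec: "Aa a = (if a = 0 then 1 else (\<Sum>s\<in>{1..a}. fps_X * Aa (a - s)))"
  unfolding Aa_def by (subst sum_comps) (simp add: sum_distrib_left)

lemma greedy_gt: "\<not> m \<le> h \<Longrightarrow> greedy (m # ms) h (s # c) = greedy (m # ms) s c"
  by simp

lemma greedy_gt_Nil: "\<not> m \<le> h \<Longrightarrow> greedy (m # ms) h [] = False"
  by simp

lemma P_Cons:
  assumes "1 \<le> m"
  shows "P (m # ms) h a = (if m \<le> h then P ms (h - m) a
     else (if a = 0 then 0 else (\<Sum>s\<in>{1..a}. fps_X * P (m # ms) s (a - s))))"
proof (cases "m \<le> h")
  case True
  then show ?thesis unfolding P_def by simp
next
  case False
  show ?thesis
  proof (cases "a = 0")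
    case True
    then show ?thesis using False unfolding P_def by (simp add: comps_0)
  next
    case a: False
    have "P (m # ms) h a = (\<Sum>s\<in>{1..a}. \<Sum>c\<in>comps (a - s).
        if greedy (m # ms) h (s # c) then fps_X ^ length (s # c) else 0)"
      unfolding P_def using a by (subst sum_comps) (simp del: greedy.simps)
    also have "\<dots> = (\<Sum>s\<in>{1..a}. \<Sum>c\<in>comps (a - s).
        fps_X * (if greedy (m # ms) s c then fps_X ^ length c else 0))"
      using False by (intro sum.cong refl) (simp del: greedy.simps add: greedy_gt)
    also have "\<dots> = (\<Sum>s\<in>{1..a}. fps_X * P (m # ms) s (a - s))"
      unfolding P_def by (simp add: sum_distrib_left del: greedy.simps)
    finally show ?thesis using False a by simp
  qed
qed

lemma P_small:
  assumes "1 \<le> m" "h < m"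
  shows "P (m # ms) h a = P (m # ms) 0 a"
  using P_Cons[OF assms(1), of ms h a] P_Cons[OF assms(1), of ms 0 a] assms by simp

abbreviation Xo :: "real fps fps" where "Xo \<equiv> fps_X"
abbreviation Uc :: "real fps fps" where "Uc \<equiv> fps_const fps_X"

definition Kf :: "nat list \<Rightarrow> real fps fps" where "Kf ms = Abs_fps (\<lambda>a. P ms 0 a)"
definition Ff :: "nat list \<Rightarrow> real fps fps" where "Ff ms = Abs_fps (\<lambda>a. \<Sum>h\<le>a. P ms h (a - h))"

lemma sum_atMost_split0: "(\<Sum>h\<le>(a::nat). f h) = f 0 + (\<Sum>h\<in>{1..a}. f h)"
proof -
  have "{..a} = insert 0 {1..a}" by auto
  then show ?thesis by simp
qed

lemma K_eq:
  assumes "1 \<le> m"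
  shows "Kf (m # ms) = Uc * (Ff (m # ms) - Kf (m # ms))"
proof (rule fps_ext)
  fix a
  show "Kf (m # ms) $ a = (Uc * (Ff (m # ms) - Kf (m # ms))) $ a"
  proof (cases "a = 0")
    case True
    then show ?thesis unfolding Kf_def Ff_def using P_Cons[OF assms, of ms 0 0] assms by simp
  next
    case False
    have "(Uc * (Ff (m # ms) - Kf (m # ms))) $ a = fps_X * (\<Sum>h\<in>{1..a}. P (m # ms) h (a - h))"
      unfolding Kf_def Ff_def by (simp add: sum_atMost_split0)
    also have "\<dots> = P (m # ms) 0 a"
      using P_Cons[OF assms, of ms 0 a] False assms by (simp add: sum_distrib_left)
    finally show ?thesis unfolding Kf_def by simp
  qed
qed

definition Qm :: "nat \<Rightarrow> real fps fps" where "Qm m = Abs_fps (\<lambda>i. if i < m then 1 else 0)"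

lemma F_eq:
  assumes "1 \<le> m"
  shows "Ff (m # ms) = Xo ^ m * Ff ms + Qm m * Kf (m # ms)"
proof (rule fps_ext)
  fix a
  have "Ff (m # ms) $ a = (\<Sum>h\<le>a. if m \<le> h then P ms (h - m) (a - h) else P (m # ms) 0 (a - h))"
    unfolding Ff_def fps_nth_Abs_fps using P_Cons[OF assms] P_small[OF assms] by (intro sum.cong) auto
  also have "\<dots> = (\<Sum>h\<le>a. if m \<le> h then P ms (h - m) (a - h) else 0) + (\<Sum>h\<le>a. if m \<le> h then 0 else P (m # ms) 0 (a - h))"
    by (simp add: sum.distrib[symmetric] if_distrib cong: if_cong)
  also have "(\<Sum>h\<le>a. if m \<le> h then P ms (h - m) (a - h) else 0) = (Xo ^ m * Ff ms) $ a"
  proof (cases "a < m")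
    case True
    then show ?thesis by (simp add: fps_X_power_mult_nth)
  next
    case False
    have "(\<Sum>h\<le>a. if m \<le> h then P ms (h - m) (a - h) else 0) = (\<Sum>h\<in>{m..a}. P ms (h - m) (a - h))"
      by (subst sum.inter_filter[symmetric]) (auto intro!: sum.cong)
    also have "\<dots> = (\<Sum>h'\<le>a - m. P ms h' (a - m - h'))"
    proof -
      have "(\<Sum>h'\<le>a - m. P ms h' (a - m - h')) = (\<Sum>h\<in>(\<lambda>h'. h' + m) ` {..a - m}. P ms (h - m) (a - h))"
        by (subst sum.reindex) (auto simp: inj_on_def add.commute intro!: sum.cong)
      also have "(\<lambda>h'. h' + m) ` {..a - m} = {m..a}"
      proof
        show "{m..a} \<subseteq> (\<lambda>h'. h' + m) ` {..a - m}"
        proof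
          fix x assume "x \<in> {m..a}"
          then have "x = (x - m) + m" "x - m \<in> {..a - m}" by auto
          then show "x \<in> (\<lambda>h'. h' + m) ` {..a - m}" by blast
        qed
      qed (use False in auto)
      finally show ?thesis by simp
    qed
    finally show ?thesis using False by (simp add: fps_X_power_mult_nth Ff_def)
  qed
  also have "(\<Sum>h\<le>a. if m \<le> h then 0 else P (m # ms) 0 (a - h)) = (Qm m * Kf (m # ms)) $ a"
    unfolding fps_mult_nth Qm_def Kf_def by (simp add: atLeast0AtMost) (intro sum.cong; simp)
  finally show "Ff (m # ms) $ a = (Xo ^ m * Ff ms + Qm m * Kf (m # ms)) $ a" by simp
qed

definition Q1 :: "real fps fps" where "Q1 = Abs_fps (\<lambda>i. 1)"

lemma Qm_mult: "Qm m * (1 - Xo) = 1 - Xo ^ m"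
proof (rule fps_ext)
  fix n
  have e: "Qm m * (1 - Xo) = Qm m - Xo * Qm m" by (simp add: algebra_simps)
  show "(Qm m * (1 - Xo)) $ n = (1 - Xo ^ m) $ n"
    unfolding e by (cases n) (auto simp: Qm_def)
qed

lemma Q1_mult: "Q1 * (1 - Xo) = 1"
proof (rule fps_ext)
  fix n
  have e: "Q1 * (1 - Xo) = Q1 - Xo * Q1" by (simp add: algebra_simps)
  show "(Q1 * (1 - Xo)) $ n = 1 $ n"
    unfolding e by (cases n) (auto simp: Q1_def)
qed

lemma F_Nil: "Ff [] * (1 - Xo - Uc * Xo) = 1"
proof -
  define Af where "Af = Abs_fps (\<lambda>a. Aa a)"
  have F: "Ff [] = Q1 * Af"
  proof (rule fps_ext)
    fix a
    have "(Q1 * Af) $ a = (\<Sum>i=0..a. Aa (a - i))" unfolding fps_mult_nth Q1_def Af_def by simp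
    then show "Ff [] $ a = (Q1 * Af) $ a" unfolding Ff_def P_Nil by (simp add: atLeast0AtMost)
  qed
  have A: "Af = 1 + Uc * (Xo * (Q1 * Af))"
  proof (rule fps_ext)
    fix a
    show "Af $ a = (1 + Uc * (Xo * (Q1 * Af))) $ a"
    proof (cases a)
      case 0
      then show ?thesis unfolding Af_def by (simp add: Aa_rec)
    next
      case (Suc b)
      have "(Q1 * Af) $ b = (\<Sum>i=0..b. Aa (b - i))" unfolding fps_mult_nth Q1_def Af_def by simp
      also have "\<dots> = (\<Sum>s\<in>{1..Suc b}. Aa (Suc b - s))"
      proof -
        have "(\<Sum>s\<in>{1..Suc b}. Aa (Suc b - s)) = (\<Sum>i\<in>Suc ` {0..b}. Aa (Suc b - i))" by simp
        also have "\<dots> = (\<Sum>i=0..b. Aa (b - i))" by (subst sum.reindex) auto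
        finally show ?thesis by simp
      qed
      finally have qa: "(Q1 * Af) $ b = (\<Sum>s\<in>{1..Suc b}. Aa (Suc b - s))" .
      have "(1 + Uc * (Xo * (Q1 * Af))) $ Suc b = fps_X * (Q1 * Af) $ b" by simp
      also have "\<dots> = fps_X * (\<Sum>s\<in>{1..Suc b}. Aa (Suc b - s))" using qa by simp
      also have "\<dots> = Aa (Suc b)" by (subst (2) Aa_rec) (simp add: sum_distrib_left distrib_left)
      finally show ?thesis unfolding Suc Af_def by simp
    qed
  qed
  have "Ff [] * (1 - Xo - Uc * Xo) = (Q1 * (1 - Xo)) * Af - Uc * (Xo * (Q1 * Af))"
    unfolding F by (simp add: algebra_simps)
  also have "\<dots> = 1" using A Q1_mult by (metis add_diff_cancel_right' mult_1)
  finally show ?thesis .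
qed





lemma inv1: "(f :: real fps fps) $ 0 = 1 \<Longrightarrow> f * inverse f = 1"
proof -
  assume f0: "f $ 0 = 1"
  have i1: "inverse (1 :: real fps) = 1" using inverse_mult_eq_1'[of "1::real fps"] by simp
  have "inverse f = fps_right_inverse f (inverse (f $ 0))" by (simp add: fps_inverse_def)
  also have "\<dots> = fps_right_inverse f 1" using f0 i1 by simp
  finally show ?thesis using fps_right_inverse[of f 1] f0 by simp
qed

definition Dm :: "nat \<Rightarrow> real fps fps" where "Dm m = 1 - Xo - Uc * (Xo - Xo ^ m)"
definition Ee :: "real fps fps" where "Ee = 1 - Xo - Uc * Xo"

lemma Dm0: "1 \<le> m \<Longrightarrow> Dm m $ 0 = 1"
  unfolding Dm_def by (simp add: fps_X_power_iff)

lemma Ee0: "Ee $ 0 = 1"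
  unfolding Ee_def by simp

lemma Dm_inv: "1 \<le> m \<Longrightarrow> Dm m * inverse (Dm m) = 1"
  using inv1 Dm0 by blast

lemma Ee_inv: "Ee * inverse Ee = 1"
  using inv1 Ee0 by blast

lemma FD:
  assumes "1 \<le> m"
  shows "Ff (m # ms) * Dm m = Xo ^ m * (1 - Xo) * (1 + Uc) * Ff ms"
proof -
  let ?F = "Ff (m # ms)" and ?K = "Kf (m # ms)" and ?F' = "Ff ms"
  have k: "?K * (1 + Uc) = Uc * ?F" using K_eq[OF assms, of ms] by (simp add: algebra_simps)
  have f: "?F = Xo ^ m * ?F' + Qm m * ?K" by (rule F_eq[OF assms])
  have "?F * ((1 - Xo) * (1 + Uc)) = Xo ^ m * ?F' * ((1 - Xo) * (1 + Uc)) + (Qm m * (1 - Xo)) * (?K * (1 + Uc))"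
    by (subst f) (simp add: algebra_simps)
  also have "\<dots> = Xo ^ m * ?F' * ((1 - Xo) * (1 + Uc)) + (1 - Xo ^ m) * (Uc * ?F)"
    by (simp add: Qm_mult k)
  finally have "?F * ((1 - Xo) * (1 + Uc)) - (1 - Xo ^ m) * (Uc * ?F) = Xo ^ m * ?F' * ((1 - Xo) * (1 + Uc))"
    by simp
  moreover have "?F * ((1 - Xo) * (1 + Uc)) - (1 - Xo ^ m) * (Uc * ?F) = ?F * Dm m"
    unfolding Dm_def by (simp add: algebra_simps)
  ultimately have "?F * Dm m = Xo ^ m * ?F' * ((1 - Xo) * (1 + Uc))" by simp
  also have "\<dots> = Xo ^ m * (1 - Xo) * (1 + Uc) * ?F'" by (simp only: ac_simps)
  finally show ?thesis .
qed

definition fac :: "nat \<Rightarrow> real fps fps" where "fac mi = Xo ^ mi * (1 - Xo) * (1 + Uc) * inverse (Dm mi)"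

lemma Ff_closed: "pos ms \<Longrightarrow> Ff ms = prod_list (map fac ms) * inverse Ee"
proof (induction ms)
  case Nil
  have "Ff [] = Ff [] * (Ee * inverse Ee)" using Ee_inv by simp
  also have "\<dots> = (Ff [] * Ee) * inverse Ee" by (simp add: mult.assoc)
  also have "\<dots> = inverse Ee" using F_Nil unfolding Ee_def by simp
  finally show ?case by simp
next
  case (Cons m ms)
  then have m: "1 \<le> m" "pos ms" by auto
  have "Ff (m # ms) = Ff (m # ms) * (Dm m * inverse (Dm m))" using Dm_inv[OF m(1)] by simp
  also have "\<dots> = (Ff (m # ms) * Dm m) * inverse (Dm m)" by (simp add: mult.assoc)
  also have "\<dots> = fac m * Ff ms" unfolding FD[OF m(1)] fac_def by (simp add: algebra_simps)
  finally show ?case using Cons.IH[OF m(2)] by (simp add: mult.assoc)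
qed

lemma one_plus_Uc: "(1 + Uc) \<noteq> 0"
proof
  assume "1 + Uc = 0"
  then have "(1 + Uc) $ 0 = 0" by simp
  then have "(1 :: real fps) + fps_X = 0" by simp
  then have "((1 :: real fps) + fps_X) $ 0 = 0" by simp
  then show False by simp
qed

lemma Kf_closed:
  assumes "1 \<le> m"
  shows "Kf (m # ms) = Uc * Xo ^ m * (1 - Xo) * inverse (Dm m) * Ff ms"
proof -
  let ?F = "Ff (m # ms)" and ?K = "Kf (m # ms)" and ?F' = "Ff ms"
  have k: "?K * (1 + Uc) = Uc * ?F" using K_eq[OF assms, of ms] by (simp add: algebra_simps)
  have "?F = ?F * (Dm m * inverse (Dm m))" using Dm_inv[OF assms] by simp
  also have "\<dots> = (?F * Dm m) * inverse (Dm m)" by (simp add: mult.assoc)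
  also have "\<dots> = Xo ^ m * (1 - Xo) * (1 + Uc) * ?F' * inverse (Dm m)" unfolding FD[OF assms] ..
  finally have fe: "?F = Xo ^ m * (1 - Xo) * (1 + Uc) * ?F' * inverse (Dm m)" .
  have "?K * (1 + Uc) = Uc * (Xo ^ m * (1 - Xo) * (1 + Uc) * ?F' * inverse (Dm m))"
    using k fe by simp
  also have "\<dots> = (Uc * Xo ^ m * (1 - Xo) * inverse (Dm m) * ?F') * (1 + Uc)" by (simp only: ac_simps)
  finally show ?thesis using one_plus_Uc by simp
qed

lemma fac_alt: "1 \<le> mi \<Longrightarrow> Xo ^ mi + Uc * Xo ^ mi * (1 - Xo ^ mi) * inverse (Dm mi) = fac mi"
proof -
  assume mi: "1 \<le> mi"
  have "Xo ^ mi + Uc * Xo ^ mi * (1 - Xo ^ mi) * inverse (Dm mi)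
      = (Xo ^ mi * Dm mi + Uc * Xo ^ mi * (1 - Xo ^ mi)) * inverse (Dm mi)"
    using Dm_inv[OF mi] by (simp add: algebra_simps)
  also have "Xo ^ mi * Dm mi + Uc * Xo ^ mi * (1 - Xo ^ mi) = Xo ^ mi * (1 - Xo) * (1 + Uc)"
    unfolding Dm_def by (simp add: algebra_simps)
  finally show ?thesis unfolding fac_def by simp
qed

lemma Gtau_Kf:
  assumes "pos ms" "ms \<noteq> []"
  shows "Gtau ms = Kf ms"
proof -
  obtain m ms' where ms: "ms = m # ms'" using assms(2) by (cases ms) auto
  have m: "1 \<le> m" "pos ms'" using assms(1) ms by auto
  have pl: "prod_list (map (\<lambda>mi. Xo ^ mi + Uc * Xo ^ mi * (1 - Xo ^ mi) * inverse (1 - Xo - Uc * (Xo - Xo ^ mi))) ms')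
      = prod_list (map fac ms')"
    using fac_alt m(2) unfolding pos_def Dm_def by (intro arg_cong[where f=prod_list] map_cong) auto
  have "Gtau ms = Uc * Xo ^ m * (1 - Xo) * inverse (Dm m) * inverse Ee * prod_list (map fac ms')"
    unfolding Gtau_def Let_def ms Dm_def Ee_def using pl by simp
  also have "\<dots> = Kf ms"
    unfolding ms Kf_closed[OF m(1)] Ff_closed[OF m(2)] by (simp add: ac_simps)
  finally show ?thesis .
qed





lemma sum_split_filter:
  "finite A \<Longrightarrow> (\<Sum>x\<in>A. f x) = (\<Sum>x\<in>{x\<in>A. Q x}. f x) + (\<Sum>x\<in>{x\<in>A. \<not> Q x}. f x)"
proof -
  assume fA: "finite A"
  have "A = {x\<in>A. Q x} \<union> {x\<in>A. \<not> Q x}" by auto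
  then have "(\<Sum>x\<in>A. f x) = (\<Sum>x\<in>{x\<in>A. Q x} \<union> {x\<in>A. \<not> Q x}. f x)" by simp
  also have "\<dots> = (\<Sum>x\<in>{x\<in>A. Q x}. f x) + (\<Sum>x\<in>{x\<in>A. \<not> Q x}. f x)"
    using fA by (intro sum.union_disjoint) auto
  finally show ?thesis .
qed

lemma factor_coeff_eq:
  assumes "pos ms" "ms \<noteq> []"
  shows "factor_coeff ms a = (\<Sum>c\<in>{c\<in>comps a. \<not> greedy ms 0 c}. lpoly (length c))"
proof -
  have "Gtau ms $ a = P ms 0 a" using Gtau_Kf[OF assms] unfolding Kf_def by simp
  also have "\<dots> = (\<Sum>c\<in>{c\<in>comps a. greedy ms 0 c}. fps_X ^ length c)"
    unfolding P_def by (rule sum.inter_filter[OF finite_comps, symmetric])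
  finally have g: "Gtau ms $ a = (\<Sum>c\<in>{c\<in>comps a. greedy ms 0 c}. fps_X ^ length c)" .
  have "Tmap (Gtau ms $ a) = (\<Sum>c\<in>{c\<in>comps a. greedy ms 0 c}. lpoly (length c))"
    unfolding g by (rule Tmap_sum) (simp add: finite_comps)
  moreover have "monom (1 / fact a) a = (\<Sum>c\<in>{c\<in>comps a. greedy ms 0 c}. lpoly (length c))
      + (\<Sum>c\<in>{c\<in>comps a. \<not> greedy ms 0 c}. lpoly (length c))"
    unfolding lpoly_comps[symmetric] by (rule sum_split_filter[OF finite_comps])
  ultimately show ?thesis unfolding factor_coeff_def by simp
qed

definition Xv :: "nat set \<Rightarrow> (nat \<Rightarrow> nat) \<Rightarrow> real" where
  "Xv I r = Phi (\<Prod>i\<in>I. lpoly (r i))"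

definition Sv :: "nat set \<Rightarrow> (nat \<Rightarrow> nat) \<Rightarrow> real" where
  "Sv I r = real (card (Sset I r))"

lemma Xv_cong: "(\<And>i. i \<in> I \<Longrightarrow> r i = r' i) \<Longrightarrow> Xv I r = Xv I r'"
  unfolding Xv_def by (metis (no_types, lifting) prod.cong)

lemma Sv_cong: "(\<And>i. i \<in> I \<Longrightarrow> r i = r' i) \<Longrightarrow> Sv I r = Sv I r'"
  unfolding Sv_def Sset_def by (metis (no_types, lifting))

lemma Xv_eq:
  assumes "finite I"
  shows "(\<Sum>f\<in>PiE I (\<lambda>i. comps (a i)). Xv I (\<lambda>i. length (f i)))
     = real (card {w. set w \<subseteq> I \<and> (\<forall>i\<in>I. count_list w i = a i)})"
proof -
  have "(\<Sum>f\<in>PiE I (\<lambda>i. comps (a i)). Xv I (\<lambda>i. length (f i)))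
      = Phi (\<Sum>f\<in>PiE I (\<lambda>i. comps (a i)). \<Prod>i\<in>I. lpoly (length (f i)))"
    unfolding Xv_def Phi_sum ..
  also have "(\<Sum>f\<in>PiE I (\<lambda>i. comps (a i)). \<Prod>i\<in>I. lpoly (length (f i)))
      = (\<Prod>i\<in>I. \<Sum>c\<in>comps (a i). lpoly (length c))"
    by (rule prod_sum_PiE[symmetric]) (simp_all add: assms finite_comps)
  also have "\<dots> = (\<Prod>i\<in>I. monom (1 / fact (a i)) (a i))" by (simp add: lpoly_comps)
  also have "\<dots> = monom (\<Prod>i\<in>I. 1 / fact (a i)) (\<Sum>i\<in>I. a i)" by (rule prod_monom)
  finally have "(\<Sum>f\<in>PiE I (\<lambda>i. comps (a i)). Xv I (\<lambda>i. length (f i)))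
      = (\<Prod>i\<in>I. 1 / fact (a i)) * fact (\<Sum>i\<in>I. a i)" by (simp add: Phi_monom)
  also have "\<dots> = fact (\<Sum>i\<in>I. a i) / (\<Prod>i\<in>I. fact (a i))" by (simp add: prod_dividef)
  also have "\<dots> = real (card {w. set w \<subseteq> I \<and> (\<forall>i\<in>I. count_list w i = a i)})"
    by (rule card_words[OF assms, symmetric])
  finally show ?thesis .
qed

lemma Sv_eq:
  assumes "finite I"
  shows "(\<Sum>f\<in>PiE I (\<lambda>i. comps (a i)). Sv I (\<lambda>i. length (f i)))
     = real (card {w. set w \<subseteq> I \<and> (\<forall>i\<in>I. count_list w i = a i)})"
proof -
  have "{w. set w \<subseteq> I \<and> (\<forall>i\<in>I. count_list w i = a i)} =
      {w. set w \<subseteq> I \<and> (\<forall>i\<in>I. (\<lambda>i c. True) i (compw i w)) \<and> (\<forall>i\<in>I. count_list w i = a i)}" by simp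
  then have "card {w. set w \<subseteq> I \<and> (\<forall>i\<in>I. count_list w i = a i)}
      = (\<Sum>f\<in>PiE I (\<lambda>i. {c\<in>comps (a i). True}). card (Wset I f))"
    using decomp[OF assms, of "\<lambda>i c. True" a] by simp
  also have "\<dots> = (\<Sum>f\<in>PiE I (\<lambda>i. comps (a i)). card (Sset I (\<lambda>i. length (f i))))"
  proof (intro sum.cong)
    fix f assume "f \<in> PiE I (\<lambda>i. comps (a i))"
    then have "\<forall>i\<in>I. 0 \<notin> set (f i)" unfolding comps_def by auto
    then show "card (Wset I f) = card (Sset I (\<lambda>i. length (f i)))" by (rule card_W_S)
  qed simp
  finally show ?thesis unfolding Sv_def by simp
qed

lemma comp_len_eq: "0 \<notin> set c \<Longrightarrow> length c = sum_list c \<Longrightarrow> c = replicate (length c) 1"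
proof (induction c)
  case (Cons x c)
  have "length c \<le> sum_list c" using Cons.prems length_le_sum by simp
  then have "x = 1" "length c = sum_list c" using Cons.prems by auto
  then show ?case using Cons by simp
qed simp

lemma Xv_Sv:
  assumes "finite I"
  shows "Xv I r = Sv I r"
proof (induction "\<Sum>i\<in>I. r i" arbitrary: r rule: less_induct)
  case less
  let ?P = "PiE I (\<lambda>i. comps (r i))"
  define f1 where "f1 = restrict (\<lambda>i. replicate (r i) (1::nat)) I"
  have f1P: "f1 \<in> ?P" unfolding f1_def comps_def by (auto simp: sum_list_replicate)
  have lt: "(\<Sum>i\<in>I. length (f i)) < (\<Sum>i\<in>I. r i)" if f: "f \<in> ?P - {f1}" for f
  proof -
    have le: "length (f i) \<le> r i" if "i \<in> I" for i
    proof -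
      have "f i \<in> comps (r i)" using f that by auto
      then show ?thesis using length_le_sum[of "f i"] unfolding comps_def by auto
    qed
    have "\<exists>i\<in>I. length (f i) < r i"
    proof (rule ccontr)
      assume "\<not> (\<exists>i\<in>I. length (f i) < r i)"
      then have eq: "length (f i) = r i" if "i \<in> I" for i using le that by fastforce
      have "f i = f1 i" if "i \<in> I" for i
      proof -
        have "0 \<notin> set (f i)" "sum_list (f i) = r i" using f that unfolding comps_def by auto
        then have "f i = replicate (length (f i)) 1" using comp_len_eq[of "f i"] eq[OF that] by simp
        then show ?thesis using eq[OF that] that unfolding f1_def by simp
      qed
      then have "f = f1" using PiE_ext[OF _ f1P, of f] f by blast
      then show False using f by simp
    qed
    then show ?thesis using le assms by (intro sum_strict_mono_ex1) auto
  qed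
  have fin: "finite ?P" using assms finite_comps by (intro finite_PiE) simp_all
  have "Xv I (\<lambda>i. length (f1 i)) + (\<Sum>f\<in>?P - {f1}. Xv I (\<lambda>i. length (f i)))
      = Sv I (\<lambda>i. length (f1 i)) + (\<Sum>f\<in>?P - {f1}. Sv I (\<lambda>i. length (f i)))"
    using Xv_eq[OF assms, of r] Sv_eq[OF assms, of r]
      sum.remove[OF fin f1P, of "\<lambda>f. Xv I (\<lambda>i. length (f i))"]
      sum.remove[OF fin f1P, of "\<lambda>f. Sv I (\<lambda>i. length (f i))"] by simp
  moreover have "(\<Sum>f\<in>?P - {f1}. Xv I (\<lambda>i. length (f i))) = (\<Sum>f\<in>?P - {f1}. Sv I (\<lambda>i. length (f i)))"
    using lt less.hyps by (intro sum.cong) auto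
  ultimately have "Xv I (\<lambda>i. length (f1 i)) = Sv I (\<lambda>i. length (f1 i))" by simp
  moreover have "Xv I (\<lambda>i. length (f1 i)) = Xv I r" "Sv I (\<lambda>i. length (f1 i)) = Sv I r"
    unfolding f1_def by (auto intro: Xv_cong Sv_cong)
  ultimately show ?case by simp
qed



lemma sum0_comp: "0 \<notin> set (c::nat list) \<Longrightarrow> sum_list c = 0 \<Longrightarrow> c = []"
proof -
  assume a: "0 \<notin> set c" "sum_list c = 0"
  have "length c \<le> sum_list c" using length_le_sum[OF a(1)] .
  then have "length c = 0" using a(2) by linarith
  then show "c = []" by simp
qed

lemma greedy_Nil_false: "pos ms \<Longrightarrow> ms \<noteq> [] \<Longrightarrow> \<not> greedy ms 0 []"
  by (cases ms) auto

theorem theorem4p1: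
  fixes k :: nat and ms :: "nat list" and \<alpha> :: "nat \<Rightarrow> nat"
  assumes "1 \<le> k" and "ms \<noteq> []" and "\<forall>m\<in>set ms. 1 \<le> m"
  shows "real (card {w. set w \<subseteq> {1..k} \<and> \<not> contains_vinc ms w \<and>
                        (\<forall>i\<in>{1..k}. count_list w i = \<alpha> i)})
         = Phi (\<Prod>i\<in>{1..k}. factor_coeff ms (\<alpha> i))"
proof -
  define I where "I = {1..k}"
  have fI: "finite I" unfolding I_def by simp
  have pms: "pos ms" using assms(3) unfolding pos_def by blast
  let ?A = "\<lambda>i. {c\<in>comps (\<alpha> i). \<not> greedy ms 0 c}"
  have cw: "\<not> contains_vinc ms w \<longleftrightarrow> (\<forall>i\<in>I. \<not> greedy ms 0 (compw i w))" if "set w \<subseteq> I" for w :: "nat list"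
  proof -
    have "compw i w = []" if "i \<notin> I" for i
    proof -
      have "i \<notin> set w" using \<open>set w \<subseteq> I\<close> that by blast
      then have "count_list w i = 0" by (simp add: count_list_0_iff)
      then show ?thesis using sum0_comp[OF zero_compw] count_compw[of w i] by simp
    qed
    then have "(\<exists>i. greedy ms 0 (compw i w)) \<longleftrightarrow> (\<exists>i\<in>I. greedy ms 0 (compw i w))"
      using greedy_Nil_false[OF pms assms(2)] by metis
    then show ?thesis using contains_compw[OF pms assms(2)] by simp
  qed
  have seteq: "{w. set w \<subseteq> I \<and> \<not> contains_vinc ms w \<and> (\<forall>i\<in>I. count_list w i = \<alpha> i)}
      = {w. set w \<subseteq> I \<and> (\<forall>i\<in>I. (\<lambda>i c. \<not> greedy ms 0 c) i (compw i w)) \<and> (\<forall>i\<in>I. count_list w i = \<alpha> i)}"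
    using cw by blast
  have "real (card {w. set w \<subseteq> I \<and> \<not> contains_vinc ms w \<and> (\<forall>i\<in>I. count_list w i = \<alpha> i)})
      = (\<Sum>f\<in>PiE I ?A. real (card (Wset I f)))"
    unfolding seteq using decomp[OF fI, of "\<lambda>i c. \<not> greedy ms 0 c" \<alpha>] by (simp add: of_nat_sum)
  also have "\<dots> = (\<Sum>f\<in>PiE I ?A. Sv I (\<lambda>i. length (f i)))"
  proof (intro sum.cong refl)
    fix f assume "f \<in> PiE I ?A"
    then have "\<forall>i\<in>I. 0 \<notin> set (f i)" unfolding comps_def by auto
    then show "real (card (Wset I f)) = Sv I (\<lambda>i. length (f i))" unfolding Sv_def by (simp add: card_W_S)
  qed
  also have "\<dots> = (\<Sum>f\<in>PiE I ?A. Xv I (\<lambda>i. length (f i)))" using Xv_Sv[OF fI] by simp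
  also have "\<dots> = Phi (\<Sum>f\<in>PiE I ?A. \<Prod>i\<in>I. lpoly (length (f i)))"
    unfolding Xv_def Phi_sum ..
  also have "(\<Sum>f\<in>PiE I ?A. \<Prod>i\<in>I. lpoly (length (f i))) = (\<Prod>i\<in>I. \<Sum>c\<in>?A i. lpoly (length c))"
    by (rule prod_sum_PiE[symmetric]) (simp_all add: fI finite_comps)
  also have "\<dots> = (\<Prod>i\<in>I. factor_coeff ms (\<alpha> i))"
    using factor_coeff_eq[OF pms assms(2)] by simp
  finally show ?thesis unfolding I_def .
qed


end
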